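(* Let $\mathbf{PsTop}$ be the category of pseudotopological spaces, with cylinder $IX = X \times [0,1]$, $i_k(x) = (x,k)$ ($k=0,1$), $p : X\times[0,1]\to X$ the projection, initial object $\varnothing$ (the empty space), and $\mathrm{cof}$ the class of morphisms $i : B \to A$ having the homotopy extension property (defined below). Then $(\mathbf{PsTop}, I, \mathrm{cof}, \varnothing)$ is an $I$-category.
   Context: Pseudotopological spaces: a convergence space is a set $X$ with a relation between filters on $X$ and points (written $\lambda \to x$) such that $\lambda \to x$, $\lambda\subseteq\lambda'$ imply $\lambda'\to x$, and the principal ultrafilter $\dot x \to x$; it is pseudotopological iff $\lambda \to x$ holds exactly when every ultrafilter containing $\lambda$ converges to $x$. Continuous maps: $\lambda\to x$ implies $f(\lambda)\to f(x)$, where $f(\lambda)$ is the filter generated by images. $[0,1]$ has its topological convergence ($\lambda \to x$ iff $\lambda$ contains the neighbourhood filter of $x$); products and pushouts are the initial/final structures in $\mathbf{PsTop}$. Homotopy extension property of $i : B \to A$: for $k = 0$ and $k=1$, for every object $Y$ and morphisms $f : A \to Y$, $G : IB \to Y$ with $f \circ i = G \circ i_k$, there exists $H : IA \to Y$ with $H \circ i_k = f$ and $H \circ Ii = G$. An $I$-category is a tuple $(\mathcal{C}, \mathrm{cof}, (I,i_0,i_1,p), \varnothing)$ with $(I,i_0,i_1,p)$ a cylinder (functor $I$, natural transformations $i_0,i_1 : \mathrm{Id} \to I$, $p : I \to \mathrm{Id}$, $p i_k = \mathrm{id}$), $\varnothing$ an initial object, satisfying: (1) Cylinder axiom: $I\varnothing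 = \varnothing$. (2) Pushout axiom: for a cofibration $i : B \to A$ and any $f : B \to X$ the pushout $A \cup_B X$ exists, the induced map $\bar i : X \to A\cup_B X$ is a cofibration, and $I$ carries this pushout to a pushout, $I(A\cup_B X) = IA \cup_{IB} IX$. (3) Cofibration axiom: isomorphisms are cofibrations; $\varnothing \to X$ is a cofibration for every $X$; composites of cofibrations are cofibrations; every cofibration has the homotopy extension property. (4) Interchange axiom: for every $X$ there is $T : IIX \to IIX$ with $T i_k = I i_k$ and $T I(i_k) = i_k$ for $k=0,1$. (5) Relative cylinder axiom: for a cofibration $i : B \to A$, the map $j = (i_0, Ii, i_1) : A \cup_B IB \cup_B A \to IA$ induced from the pushout of $A \xleftarrow{i} B \xrightarrow{i_0} IB \xleftarrow{i_1} B \xrightarrow{i} A$ is a cofibration. *)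

theory Defs
  imports "HOL-Analysis.Analysis"
begin

text \<open>Filters are Isabelle filters
F with F \<noteq> bot and F \<le> principal X; note that in Isabelle's order "F' \<le> F" means
that F' is finer, i.e. F \<subseteq> F' as families of sets.\<close>

record 'a cspace =
  carrier :: "'a set"
  conv :: "'a filter \<Rightarrow> 'a \<Rightarrow> bool"

definition pfilter :: "'a set \<Rightarrow> 'a filter \<Rightarrow> bool" where
  "pfilter X F \<longleftrightarrow> F \<noteq> bot \<and> F \<le> principal X"

definition ultra :: "'a filter \<Rightarrow> bool" where
  "ultra U \<longleftrightarrow> U \<noteq> bot \<and> (\<forall>G. G \<le> U \<longrightarrow> G \<noteq> bot \<longrightarrow> G = U)"

definition convergence_space :: "'a cspace \<Rightarrow> bool" where
  "convergence_space S \<longleftrightarrow>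
     (\<forall>F x. conv S F x \<longrightarrow> pfilter (carrier S) F \<and> x \<in> carrier S) \<and>
     (\<forall>F F' x. conv S F x \<and> pfilter (carrier S) F' \<and> F' \<le> F \<longrightarrow> conv S F' x) \<and>
     (\<forall>x\<in>carrier S. conv S (principal {x}) x)"

definition pseudotop :: "'a cspace \<Rightarrow> bool" where
  "pseudotop S \<longleftrightarrow> convergence_space S \<and>
     (\<forall>F x. pfilter (carrier S) F \<and> x \<in> carrier S \<and>
        (\<forall>U. ultra U \<and> U \<le> F \<longrightarrow> conv S U x) \<longrightarrow> conv S F x)"

text \<open>Morphisms of PsTop: continuous maps (only their values on the carrier matter).\<close>

definition cmap :: "'a cspace \<Rightarrow> 'b cspace \<Rightarrow> ('a \<Rightarrow> 'b) \<Rightarrow> bool" where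
  "cmap S T f \<longleftrightarrow> f ` carrier S \<subseteq> carrier T \<and>
     (\<forall>F x. conv S F x \<longrightarrow> conv T (filtermap f F) (f x))"

definition ps_iso :: "'a cspace \<Rightarrow> 'b cspace \<Rightarrow> ('a \<Rightarrow> 'b) \<Rightarrow> bool" where
  "ps_iso S T f \<longleftrightarrow> cmap S T f \<and>
     (\<exists>g. cmap T S g \<and> (\<forall>x\<in>carrier S. g (f x) = x) \<and> (\<forall>y\<in>carrier T. f (g y) = y))"

definition empty_space :: "'a cspace" where
  "empty_space = \<lparr>carrier = {}, conv = (\<lambda>F x. False)\<rparr>"

definition unit_interval :: "real cspace" where
  "unit_interval = \<lparr>carrier = {0..1},
     conv = (\<lambda>F t. pfilter {0..1} F \<and> t \<in> {0..1} \<and> F \<le> nhds t)\<rparr>"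

definition cyl :: "'a cspace \<Rightarrow> ('a \<times> real) cspace" where
  "cyl X = \<lparr>carrier = carrier X \<times> {0..1},
     conv = (\<lambda>F z. pfilter (carrier X \<times> {0..1}) F \<and> z \<in> carrier X \<times> {0..1} \<and>
                  conv X (filtermap fst F) (fst z) \<and>
                  conv unit_interval (filtermap snd F) (snd z))\<rparr>"

definition incl :: "real \<Rightarrow> 'a \<Rightarrow> 'a \<times> real" where
  "incl k x = (x, k)"

definition proj :: "'a \<times> real \<Rightarrow> 'a" where
  "proj z = fst z"

definition Imap :: "('a \<Rightarrow> 'b) \<Rightarrow> 'a \<times> real \<Rightarrow> 'b \<times> real" where
  "Imap f z = (f (fst z), snd z)"

definition sum_space :: "'a cspace \<Rightarrow> 'b cspace \<Rightarrow> ('a + 'b) cspace" where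
  "sum_space A X = \<lparr>carrier = Inl ` carrier A \<union> Inr ` carrier X,
     conv = (\<lambda>F z. pfilter (Inl ` carrier A \<union> Inr ` carrier X) F \<and>
       ((\<exists>G a. conv A G a \<and> z = Inl a \<and> F \<le> filtermap Inl G) \<or>
        (\<exists>G x. conv X G x \<and> z = Inr x \<and> F \<le> filtermap Inr G)))\<rparr>"

text \<open>Quotient of a space by an equivalence relation R on its carrier, with the final
structure in PsTop: the pseudotopological modification of the final convergence
w.r.t. the quotient map.\<close>
definition quotient_space :: "'a cspace \<Rightarrow> 'a rel \<Rightarrow> 'a set cspace" where
  "quotient_space S R = \<lparr>carrier = carrier S // R,
     conv = (\<lambda>F c. pfilter (carrier S // R) F \<and> c \<in> carrier S // R \<and>
       (\<forall>U. ultra U \<and> U \<le> F \<longrightarrow>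
          (\<exists>G s. conv S G s \<and> R `` {s} = c \<and> U \<le> filtermap (\<lambda>s. R `` {s}) G)))\<rparr>"

definition glue_rel :: "'a cspace \<Rightarrow> 'a rel \<Rightarrow> 'a rel" where
  "glue_rel S E = (Id_on (carrier S) \<union> E \<union> E\<inverse>)\<^sup>*"

definition glue :: "'a cspace \<Rightarrow> 'a rel \<Rightarrow> 'a set cspace" where
  "glue S E = quotient_space S (glue_rel S E)"

definition gcls :: "'a cspace \<Rightarrow> 'a rel \<Rightarrow> 'a \<Rightarrow> 'a set" where
  "gcls S E s = glue_rel S E `` {s}"

definition po_rel :: "'b cspace \<Rightarrow> ('b \<Rightarrow> 'a) \<Rightarrow> ('b \<Rightarrow> 'x) \<Rightarrow> ('a + 'x) rel" where
  "po_rel B i f = {(Inl (i b), Inr (f b)) | b. b \<in> carrier B}"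

definition pushout_space ::
  "'b cspace \<Rightarrow> 'a cspace \<Rightarrow> 'x cspace \<Rightarrow> ('b \<Rightarrow> 'a) \<Rightarrow> ('b \<Rightarrow> 'x) \<Rightarrow> ('a + 'x) set cspace" where
  "pushout_space B A X i f = glue (sum_space A X) (po_rel B i f)"

definition po_inl ::
  "'b cspace \<Rightarrow> 'a cspace \<Rightarrow> 'x cspace \<Rightarrow> ('b \<Rightarrow> 'a) \<Rightarrow> ('b \<Rightarrow> 'x) \<Rightarrow> 'a \<Rightarrow> ('a + 'x) set" where
  "po_inl B A X i f a = gcls (sum_space A X) (po_rel B i f) (Inl a)"

definition po_inr ::
  "'b cspace \<Rightarrow> 'a cspace \<Rightarrow> 'x cspace \<Rightarrow> ('b \<Rightarrow> 'a) \<Rightarrow> ('b \<Rightarrow> 'x) \<Rightarrow> 'x \<Rightarrow> ('a + 'x) set" where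
  "po_inr B A X i f x = gcls (sum_space A X) (po_rel B i f) (Inr x)"

text \<open>The universal property of a pushout square in PsTop (u \<circ> i = v \<circ> f on B), tested
against all pseudotopological spaces Z whose points have type 'z.\<close>
definition is_pushout :: "'z itself \<Rightarrow> 'b cspace \<Rightarrow> 'a cspace \<Rightarrow> 'x cspace \<Rightarrow> 'p cspace \<Rightarrow>
    ('b \<Rightarrow> 'a) \<Rightarrow> ('b \<Rightarrow> 'x) \<Rightarrow> ('a \<Rightarrow> 'p) \<Rightarrow> ('x \<Rightarrow> 'p) \<Rightarrow> bool" where
  "is_pushout (_ :: 'z itself) B A X P i f u v \<longleftrightarrow>
     pseudotop P \<and> cmap A P u \<and> cmap X P v \<and> (\<forall>b\<in>carrier B. u (i b) = v (f b)) \<and>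
     (\<forall>(Z :: 'z cspace) g h. pseudotop Z \<and> cmap A Z g \<and> cmap X Z h \<and>
        (\<forall>b\<in>carrier B. g (i b) = h (f b)) \<longrightarrow>
        (\<exists>w. cmap P Z w \<and> (\<forall>a\<in>carrier A. w (u a) = g a) \<and> (\<forall>x\<in>carrier X. w (v x) = h x)) \<and>
        (\<forall>w w'. cmap P Z w \<and> (\<forall>a\<in>carrier A. w (u a) = g a) \<and> (\<forall>x\<in>carrier X. w (v x) = h x) \<and>
                cmap P Z w' \<and> (\<forall>a\<in>carrier A. w' (u a) = g a) \<and> (\<forall>x\<in>carrier X. w' (v x) = h x)
                \<longrightarrow> (\<forall>p\<in>carrier P. w p = w' p)))"

text \<open>HEP of i : B \<rightarrow> A, tested against all pseudotopological spaces Y whose points have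
type 'y.\<close>
definition hep :: "'y itself \<Rightarrow> 'b cspace \<Rightarrow> 'a cspace \<Rightarrow> ('b \<Rightarrow> 'a) \<Rightarrow> bool" where
  "hep (_ :: 'y itself) B A i \<longleftrightarrow>
     (\<forall>k\<in>{0, 1::real}. \<forall>(Y :: 'y cspace) f G.
        pseudotop Y \<and> cmap A Y f \<and> cmap (cyl B) Y G \<and>
        (\<forall>b\<in>carrier B. f (i b) = G (incl k b)) \<longrightarrow>
        (\<exists>H. cmap (cyl A) Y H \<and> (\<forall>a\<in>carrier A. H (incl k a) = f a) \<and>
             (\<forall>z\<in>carrier (cyl B). H (Imap i z) = G z)))"

text \<open>The test spaces Y range over spaces whose
points have type 'a + 'b \<times> real; every mapping cylinder A \<union>_{B} IB (the universal test
object for the HEP) is isomorphic to such a space, so this is the HEP against all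
objects.  The theorem below moreover asserts explicitly that every cofibration has
the HEP against spaces of arbitrary type.\<close>
definition cof :: "'b cspace \<Rightarrow> 'a cspace \<Rightarrow> ('b \<Rightarrow> 'a) \<Rightarrow> bool" where
  "cof B A i \<longleftrightarrow> pseudotop B \<and> pseudotop A \<and> cmap B A i \<and>
                 hep TYPE('a + 'b \<times> real) B A i"

definition dcyl_rel :: "'b cspace \<Rightarrow> ('b \<Rightarrow> 'a) \<Rightarrow> ('a + ('b \<times> real) + 'a) rel" where
  "dcyl_rel B i = {(Inl (i b), Inr (Inl (b, 0))) | b. b \<in> carrier B} \<union>
                  {(Inr (Inr (i b)), Inr (Inl (b, 1))) | b. b \<in> carrier B}"

definition dcyl :: "'b cspace \<Rightarrow> 'a cspace \<Rightarrow> ('b \<Rightarrow> 'a) \<Rightarrow> ('a + ('b \<times> real) + 'a) set cspace" where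
  "dcyl B A i = glue (sum_space A (sum_space (cyl B) A)) (dcyl_rel B i)"

definition dcyl_raw :: "('b \<Rightarrow> 'a) \<Rightarrow> 'a + ('b \<times> real) + 'a \<Rightarrow> 'a \<times> real" where
  "dcyl_raw i s = (case s of Inl a \<Rightarrow> incl 0 a
                           | Inr (Inl z) \<Rightarrow> Imap i z
                           | Inr (Inr a) \<Rightarrow> incl 1 a)"

text \<open>j = (i_0, Ii, i_1) on the colimit, evaluated via a representative of the class.\<close>
definition dcyl_map :: "('b \<Rightarrow> 'a) \<Rightarrow> ('a + ('b \<times> real) + 'a) set \<Rightarrow> 'a \<times> real" where
  "dcyl_map i c = dcyl_raw i (SOME s. s \<in> c)"

end

theory Submission
  imports Defs
begin

lemma filtermap_cong_ev:
  assumes "eventually (\<lambda>x. f x = g x) F"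
  shows "filtermap f F = filtermap g F"
  unfolding filter_eq_iff eventually_filtermap
  using assms by (auto elim: eventually_elim2)

lemma ultra_iff:
  "ultra U \<longleftrightarrow> U \<noteq> bot \<and> (\<forall>P. eventually P U \<or> eventually (\<lambda>x. \<not> P x) U)"
proof
  assume u: "ultra U"
  show "U \<noteq> bot \<and> (\<forall>P. eventually P U \<or> eventually (\<lambda>x. \<not> P x) U)"
  proof (intro conjI allI)
    show "U \<noteq> bot" using u unfolding ultra_def by auto
    fix P
    show "eventually P U \<or> eventually (\<lambda>x. \<not> P x) U"
    proof (rule disjCI)
      assume np: "\<not> eventually (\<lambda>x. \<not> P x) U"
      let ?G = "inf U (principal {x. P x})"
      have "?G \<noteq> bot"
      proof
        assume "?G = bot"
        then have "eventually (\<lambda>x. False) ?G" by simp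
        then have "eventually (\<lambda>x. \<not> P x) U" unfolding eventually_inf_principal by simp
        with np show False by simp
      qed
      moreover have "?G \<le> U" by simp
      ultimately have "?G = U" using u unfolding ultra_def by blast
      moreover have "eventually P ?G" unfolding eventually_inf_principal by simp
      ultimately show "eventually P U" by simp
    qed
  qed
next
  assume a: "U \<noteq> bot \<and> (\<forall>P. eventually P U \<or> eventually (\<lambda>x. \<not> P x) U)"
  show "ultra U" unfolding ultra_def
  proof (intro conjI allI impI)
    show "U \<noteq> bot" using a by simp
    fix G assume gu: "G \<le> U" and gb: "G \<noteq> bot"
    show "G = U"
    proof (rule antisym[OF gu])
      show "U \<le> G" unfolding le_filter_def
      proof (intro allI impI)
        fix P assume pg: "eventually P G"
        show "eventually P U"
        proof (rule ccontr)
          assume "\<not> eventually P U"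
          then have "eventually (\<lambda>x. \<not> P x) U" using a by blast
          then have "eventually (\<lambda>x. \<not> P x) G" using gu unfolding le_filter_def by blast
          with pg have "eventually (\<lambda>x. False) G" by (auto elim: eventually_elim2)
          with gb show False by simp
        qed
      qed
    qed
  qed
qed

lemma ultra_filtermap: "ultra U \<Longrightarrow> ultra (filtermap f U)"
  unfolding ultra_iff eventually_filtermap filtermap_bot_iff by blast

lemma exists_ultra:
  assumes "F \<noteq> bot"
  shows "\<exists>U. ultra U \<and> U \<le> F"
proof -
  define A where "A = {E. \<exists>G. G \<le> F \<and> G \<noteq> bot \<and> E = {P. eventually P G}}"
  have "\<forall>C\<in>chains A. \<exists>U\<in>A. \<forall>X\<in>C. X \<subseteq> U"
  proof
    fix C assume C: "C \<in> chains A"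
    show "\<exists>U\<in>A. \<forall>X\<in>C. X \<subseteq> U"
    proof (cases "C = {}")
      case True
      then show ?thesis using assms unfolding A_def by blast
    next
      case False
      define X where "X = {G. G \<le> F \<and> G \<noteq> bot \<and> {P. eventually P G} \<in> C}"
      have CA: "C \<subseteq> A" using C chainsD2 by blast
      have Xne: "X \<noteq> {}"
      proof -
        obtain E where "E \<in> C" using False by blast
        then obtain G where "G \<le> F" "G \<noteq> bot" "E = {P. eventually P G}" using CA unfolding A_def by blast
        then show ?thesis unfolding X_def using \<open>E \<in> C\<close> by blast
      qed
      have base: "\<exists>x\<in>X. x \<le> inf G1 G2" if "G1 \<in> X" "G2 \<in> X" for G1 G2
      proof -
        have m1: "{P. eventually P G1} \<in> C" using that(1) unfolding X_def by simp
        have m2: "{P. eventually P G2} \<in> C" using that(2) unfolding X_def by simp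
        have "{P. eventually P G1} \<subseteq> {P. eventually P G2} \<or> {P. eventually P G2} \<subseteq> {P. eventually P G1}"
          using chainsD[OF C m1 m2] .
        then show ?thesis
        proof
          assume "{P. eventually P G1} \<subseteq> {P. eventually P G2}"
          then have "G2 \<le> G1" unfolding le_filter_def by blast
          then show ?thesis using that by (intro bexI[of _ G2]) auto
        next
          assume "{P. eventually P G2} \<subseteq> {P. eventually P G1}"
          then have "G1 \<le> G2" unfolding le_filter_def by blast
          then show ?thesis using that by (intro bexI[of _ G1]) auto
        qed
      qed
      have ev: "eventually P (Inf X) \<longleftrightarrow> (\<exists>b\<in>X. eventually P b)" for P
        by (rule eventually_Inf_base[OF Xne base])
      have nb: "Inf X \<noteq> bot"
      proof
        assume "Inf X = bot"
        then have "eventually (\<lambda>x. False) (Inf X)" by simp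
        then obtain b where "b \<in> X" "eventually (\<lambda>x. False) b" using ev by blast
        then show False unfolding X_def by simp
      qed
      have le: "Inf X \<le> F"
      proof -
        obtain b where "b \<in> X" using Xne by blast
        then have "b \<le> F" unfolding X_def by simp
        show ?thesis by (rule Inf_lower2[OF \<open>b \<in> X\<close> \<open>b \<le> F\<close>])
      qed
      have "{P. eventually P (Inf X)} \<in> A" unfolding A_def using nb le by blast
      moreover have "\<forall>E\<in>C. E \<subseteq> {P. eventually P (Inf X)}"
      proof
        fix E assume "E \<in> C"
        then obtain G where G: "G \<le> F" "G \<noteq> bot" "E = {P. eventually P G}" using CA unfolding A_def by blast
        then have "G \<in> X" unfolding X_def using \<open>E \<in> C\<close> by blast
        then show "E \<subseteq> {P. eventually P (Inf X)}" using G ev by blast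
      qed
      ultimately show ?thesis by blast
    qed
  qed
  from Zorn_Lemma2[OF this] obtain M where M: "M \<in> A" "\<forall>X\<in>A. M \<subseteq> X \<longrightarrow> X = M" by blast
  then obtain G where G: "G \<le> F" "G \<noteq> bot" "M = {P. eventually P G}" unfolding A_def by blast
  have "ultra G" unfolding ultra_def
  proof (intro conjI allI impI)
    show "G \<noteq> bot" by fact
    fix G' assume "G' \<le> G" "G' \<noteq> bot"
    then have "{P. eventually P G'} \<in> A" unfolding A_def using G by (blast intro: order_trans)
    moreover have "M \<subseteq> {P. eventually P G'}" using \<open>G' \<le> G\<close> G unfolding le_filter_def by blast
    ultimately have "{P. eventually P G'} = {P. eventually P G}" using M G by blast
    then show "G' = G" unfolding filter_eq_iff by blast
  qed
  then show ?thesis using G by blast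
qed

lemma le_by_ultra:
  assumes "\<And>U. ultra U \<Longrightarrow> U \<le> F \<Longrightarrow> U \<le> G"
  shows "F \<le> G"
  unfolding le_filter_def
proof (intro allI impI)
  fix P assume pg: "eventually P G"
  show "eventually P F"
  proof (rule ccontr)
    assume np: "\<not> eventually P F"
    let ?H = "inf F (principal {x. \<not> P x})"
    have "?H \<noteq> bot"
    proof
      assume "?H = bot"
      then have "eventually (\<lambda>x. False) ?H" by simp
      then have "eventually P F" unfolding eventually_inf_principal by simp
      with np show False by simp
    qed
    then obtain U where U: "ultra U" "U \<le> ?H" using exists_ultra by blast
    then have "U \<le> F" by (meson inf.boundedE)
    then have "U \<le> G" using assms U by blast
    then have "eventually P U" using pg unfolding le_filter_def by blast
    moreover have "eventually (\<lambda>x. \<not> P x) U"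
      using U(2) unfolding le_filter_def eventually_inf_principal by auto
    ultimately have "eventually (\<lambda>x. False) U" by (auto elim: eventually_elim2)
    then show False using U(1) unfolding ultra_def by simp
  qed
qed

lemma ultra_lift:
  assumes V: "ultra V" "V \<le> filtermap f F"
  shows "\<exists>W. ultra W \<and> W \<le> F \<and> filtermap f W = V"
proof -
  let ?H = "inf F (filtercomap f V)"
  have "?H \<noteq> bot"
  proof
    assume "?H = bot"
    then have "eventually (\<lambda>x. False) ?H" by simp
    then obtain P Q where P: "eventually P F" and Q: "eventually Q (filtercomap f V)"
      and PQ: "\<forall>x. P x \<longrightarrow> Q x \<longrightarrow> False"
      unfolding eventually_inf by blast
    from Q obtain Q' where Q': "eventually Q' V" "\<forall>x. Q' (f x) \<longrightarrow> Q x"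
      unfolding eventually_filtercomap by blast
    have "eventually (\<lambda>y. \<exists>x. P x \<and> y = f x) (filtermap f F)"
      unfolding eventually_filtermap using P by (auto elim: eventually_mono)
    then have "eventually (\<lambda>y. \<exists>x. P x \<and> y = f x) V" using V(2) unfolding le_filter_def by blast
    with Q'(1) have "eventually (\<lambda>y. False) V"
      by eventually_elim (use PQ Q'(2) in blast)
    then show False using V(1) unfolding ultra_def by simp
  qed
  then obtain W where W: "ultra W" "W \<le> ?H" using exists_ultra by blast
  have "filtermap f W \<le> V"
    using W(2) by (meson filtermap_filtercomap filtermap_mono inf.boundedE order_trans)
  moreover have "filtermap f W \<noteq> bot" using W(1) unfolding ultra_def filtermap_bot_iff by simp
  ultimately have "filtermap f W = V" using V(1) unfolding ultra_def by blast
  moreover have "W \<le> F" using W(2) by (meson inf.boundedE)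
  ultimately show ?thesis using W(1) by blast
qed

definition final_space :: "'a cspace \<Rightarrow> ('a \<Rightarrow> 'c) \<Rightarrow> 'c cspace" where
  "final_space S q = \<lparr>carrier = q ` carrier S,
     conv = (\<lambda>F c. pfilter (q ` carrier S) F \<and> c \<in> q ` carrier S \<and>
       (\<forall>U. ultra U \<and> U \<le> F \<longrightarrow> (\<exists>G s. conv S G s \<and> q s = c \<and> U \<le> filtermap q G)))\<rparr>"

lemma quotient_space_final: "quotient_space S R = final_space S (\<lambda>s. R `` {s})"
proof -
  have "carrier S // R = (\<lambda>s. R `` {s}) ` carrier S" unfolding quotient_def by auto
  then show ?thesis unfolding quotient_space_def final_space_def by simp
qed

lemma pfilter_mono: "pfilter X F \<Longrightarrow> F' \<le> F \<Longrightarrow> F' \<noteq> bot \<Longrightarrow> pfilter X F'"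
  unfolding pfilter_def by (meson order_trans)

lemma pfilter_filtermap: "pfilter X F \<Longrightarrow> f ` X \<subseteq> Y \<Longrightarrow> pfilter Y (filtermap f F)"
  unfolding pfilter_def filtermap_bot_iff le_principal eventually_filtermap
  by (auto elim!: eventually_mono)

lemma cs_conv_pf: "convergence_space S \<Longrightarrow> conv S F x \<Longrightarrow> pfilter (carrier S) F"
  unfolding convergence_space_def by blast

lemma cs_conv_pt: "convergence_space S \<Longrightarrow> conv S F x \<Longrightarrow> x \<in> carrier S"
  unfolding convergence_space_def by blast

lemma cs_conv_mono: "convergence_space S \<Longrightarrow> conv S F x \<Longrightarrow> F' \<le> F \<Longrightarrow> F' \<noteq> bot \<Longrightarrow> conv S F' x"
  unfolding convergence_space_def by (meson pfilter_mono)

lemma cs_conv_pure: "convergence_space S \<Longrightarrow> x \<in> carrier S \<Longrightarrow> conv S (principal {x}) x"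
  unfolding convergence_space_def by blast

lemma pt_cs: "pseudotop S \<Longrightarrow> convergence_space S"
  unfolding pseudotop_def by blast

lemma pt_ultra:
  "pseudotop S \<Longrightarrow> pfilter (carrier S) F \<Longrightarrow> x \<in> carrier S \<Longrightarrow>
    (\<And>U. ultra U \<Longrightarrow> U \<le> F \<Longrightarrow> conv S U x) \<Longrightarrow> conv S F x"
  unfolding pseudotop_def by blast

lemma ultra_nbot: "ultra U \<Longrightarrow> U \<noteq> bot"
  unfolding ultra_def by blast

lemma cmapD1: "cmap S T f \<Longrightarrow> x \<in> carrier S \<Longrightarrow> f x \<in> carrier T"
  unfolding cmap_def by blast

lemma cmapD2: "cmap S T f \<Longrightarrow> conv S F x \<Longrightarrow> conv T (filtermap f F) (f x)"
  unfolding cmap_def by blast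

lemma cmap_comp: "cmap S T f \<Longrightarrow> cmap T U g \<Longrightarrow> cmap S U (g \<circ> f)"
  unfolding cmap_def
proof (intro conjI allI impI)
  assume a: "f ` carrier S \<subseteq> carrier T \<and> (\<forall>F x. conv S F x \<longrightarrow> conv T (filtermap f F) (f x))"
    "g ` carrier T \<subseteq> carrier U \<and> (\<forall>F x. conv T F x \<longrightarrow> conv U (filtermap g F) (g x))"
  then show "(g \<circ> f) ` carrier S \<subseteq> carrier U" by (auto simp: image_subset_iff)
  fix F x assume "conv S F x"
  then have "conv U (filtermap g (filtermap f F)) (g (f x))" using a by blast
  then show "conv U (filtermap (g \<circ> f) F) ((g \<circ> f) x)" by (simp add: filtermap_filtermap o_def)
qed

lemma cmap_comp': "cmap S T f \<Longrightarrow> cmap T U g \<Longrightarrow> cmap S U (\<lambda>x. g (f x))"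
  using cmap_comp[of S T f U g] by (simp add: o_def)

lemma cmap_cong:
  assumes "cmap S T f" "convergence_space S" "\<And>x. x \<in> carrier S \<Longrightarrow> f x = g x"
  shows "cmap S T g"
  unfolding cmap_def
proof (intro conjI allI impI)
  show "g ` carrier S \<subseteq> carrier T" using assms cmapD1 by fastforce
  fix F x assume c: "conv S F x"
  have "eventually (\<lambda>y. y \<in> carrier S) F" using cs_conv_pf[OF assms(2) c] unfolding pfilter_def le_principal by simp
  then have "filtermap g F = filtermap f F"
    by (intro filtermap_cong_ev) (auto elim: eventually_mono simp: assms(3))
  moreover have "g x = f x" using assms(3) cs_conv_pt[OF assms(2) c] by simp
  ultimately show "conv T (filtermap g F) (g x)" using cmapD2[OF assms(1) c] by simp
qed

lemma pseudotop_final: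
  assumes "convergence_space S"
  shows "pseudotop (final_space S q)"
proof -
  have pr: "conv (final_space S q) (principal {x}) x" if x: "x \<in> carrier (final_space S q)" for x
  proof -
    obtain s where s: "s \<in> carrier S" "x = q s" using x unfolding final_space_def by auto
    have "U \<le> filtermap q (principal {s})" if "U \<le> principal {x}" for U
      using s that by simp
    moreover have "principal {q s} \<noteq> bot" by (simp add: principal_eq_bot_iff)
    ultimately show ?thesis unfolding final_space_def pfilter_def
      using s cs_conv_pure[OF assms s(1)] by fastforce
  qed
  show ?thesis unfolding pseudotop_def convergence_space_def
    using pr unfolding final_space_def by (auto intro: order_trans)
qed

lemma cmap_final_q:
  assumes "convergence_space S"
  shows "cmap S (final_space S q) q"
  unfolding cmap_def
proof (intro conjI allI impI)
  show "q ` carrier S \<subseteq> carrier (final_space S q)" unfolding final_space_def by simp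
  fix F x assume c: "conv S F x"
  show "conv (final_space S q) (filtermap q F) (q x)"
    unfolding final_space_def
    using c cs_conv_pf[OF assms c] cs_conv_pt[OF assms c]
    by (auto intro!: pfilter_filtermap)
qed

lemma final_univ:
  assumes S: "convergence_space S" and Z: "pseudotop Z" and g: "cmap S Z g"
    and fib: "\<And>s s'. s \<in> carrier S \<Longrightarrow> s' \<in> carrier S \<Longrightarrow> q s = q s' \<Longrightarrow> g s = g s'"
  shows "\<exists>w. cmap (final_space S q) Z w \<and> (\<forall>s\<in>carrier S. w (q s) = g s)"
proof -
  define w where "w c = g (SOME s. s \<in> carrier S \<and> q s = c)" for c
  have wq: "w (q s) = g s" if "s \<in> carrier S" for s
  proof -
    have "\<exists>s'. s' \<in> carrier S \<and> q s' = q s" using that by blast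
    then have "(SOME s'. s' \<in> carrier S \<and> q s' = q s) \<in> carrier S \<and> q (SOME s'. s' \<in> carrier S \<and> q s' = q s) = q s"
      by (rule someI_ex)
    then show ?thesis unfolding w_def using fib that by blast
  qed
  have wc: "w ` carrier (final_space S q) \<subseteq> carrier Z"
    using wq cmapD1[OF g] unfolding final_space_def by auto
  have "cmap (final_space S q) Z w"
    unfolding cmap_def
  proof (intro conjI allI impI)
    show "w ` carrier (final_space S q) \<subseteq> carrier Z" by (rule wc)
    fix F c assume c: "conv (final_space S q) F c"
    have pf: "pfilter (q ` carrier S) F" and cc: "c \<in> q ` carrier S"
      and ul: "\<And>U. ultra U \<Longrightarrow> U \<le> F \<Longrightarrow> \<exists>G s. conv S G s \<and> q s = c \<and> U \<le> filtermap q G"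
      using c unfolding final_space_def by auto
    have pfz: "pfilter (carrier Z) (filtermap w F)"
      using pf wc unfolding final_space_def by (auto intro: pfilter_filtermap)
    show "conv Z (filtermap w F) (w c)"
    proof (rule pt_ultra[OF Z pfz])
      show "w c \<in> carrier Z" using cc wc unfolding final_space_def by auto
      fix V assume V: "ultra V" "V \<le> filtermap w F"
      obtain W where W: "ultra W" "W \<le> F" "filtermap w W = V" using ultra_lift[OF V] by blast
      obtain G s where G: "conv S G s" "q s = c" "W \<le> filtermap q G" using ul[OF W(1,2)] by blast
      have s: "s \<in> carrier S" using cs_conv_pt[OF S G(1)] .
      have evG: "eventually (\<lambda>y. y \<in> carrier S) G" using cs_conv_pf[OF S G(1)] unfolding pfilter_def le_principal by simp
      have "filtermap w W \<le> filtermap w (filtermap q G)" using G(3) by (rule filtermap_mono)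
      also have "\<dots> = filtermap (\<lambda>y. w (q y)) G" by (simp add: filtermap_filtermap)
      also have "\<dots> = filtermap g G" using evG by (intro filtermap_cong_ev) (auto elim: eventually_mono simp: wq)
      finally have le: "V \<le> filtermap g G" using W(3) by simp
      have "conv Z (filtermap g G) (g s)" using cmapD2[OF g G(1)] .
      moreover have "g s = w c" using wq[OF s] G(2) by simp
      ultimately show "conv Z V (w c)"
        using cs_conv_mono[OF pt_cs[OF Z] _ le ultra_nbot[OF V(1)]] by simp
    qed
  qed
  then show ?thesis using wq by blast
qed

lemma cs_intro:
  assumes "\<And>F x. conv S F x \<Longrightarrow> pfilter (carrier S) F"
    "\<And>F x. conv S F x \<Longrightarrow> x \<in> carrier S"
    "\<And>F F' x. conv S F x \<Longrightarrow> pfilter (carrier S) F' \<Longrightarrow> F' \<le> F \<Longrightarrow> conv S F' x"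
    "\<And>x. x \<in> carrier S \<Longrightarrow> conv S (principal {x}) x"
  shows "convergence_space S"
  unfolding convergence_space_def using assms by blast

lemma carrier_cyl[simp]: "carrier (cyl X) = carrier X \<times> {0..1}"
  unfolding cyl_def by simp

lemma conv_cyl: "conv (cyl X) F z \<longleftrightarrow> pfilter (carrier X \<times> {0..1}) F \<and> z \<in> carrier X \<times> {0..1} \<and>
    conv X (filtermap fst F) (fst z) \<and> conv unit_interval (filtermap snd F) (snd z)"
  unfolding cyl_def by simp

lemma carrier_ui[simp]: "carrier unit_interval = {0..1}"
  unfolding unit_interval_def by simp

lemma conv_ui: "conv unit_interval F t \<longleftrightarrow> pfilter {0..1} F \<and> t \<in> {0..1} \<and> F \<le> nhds t"
  unfolding unit_interval_def by simp

lemma principal_le_nhds: "principal {x} \<le> nhds (x::'a::topological_space)"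
  unfolding le_filter_def eventually_principal by (auto dest: eventually_nhds_x_imp_x)

lemma pfilter_fst: "pfilter (X \<times> Y) F \<Longrightarrow> pfilter X (filtermap fst F)"
  by (erule pfilter_filtermap) auto

lemma pfilter_snd: "pfilter (X \<times> Y) F \<Longrightarrow> pfilter Y (filtermap snd F)"
  by (erule pfilter_filtermap) auto

lemma pfilter_ev: "pfilter X F \<Longrightarrow> eventually (\<lambda>x. x \<in> X) F"
  unfolding pfilter_def le_principal by simp

lemma pfilter_nbot: "pfilter X F \<Longrightarrow> F \<noteq> bot"
  unfolding pfilter_def by simp

lemma pseudotop_ui: "pseudotop unit_interval"
proof -
  have "convergence_space unit_interval"
  proof (rule cs_intro)
    show "\<And>F x. conv unit_interval F x \<Longrightarrow> pfilter (carrier unit_interval) F" by (simp add: conv_ui)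
    show "\<And>F x. conv unit_interval F x \<Longrightarrow> x \<in> carrier unit_interval" by (simp add: conv_ui)
    show "conv unit_interval F' x" if "conv unit_interval F x" "pfilter (carrier unit_interval) F'" "F' \<le> F" for F F' x
      using that unfolding conv_ui carrier_ui by (meson order_trans)
    show "\<And>x. x \<in> carrier unit_interval \<Longrightarrow> conv unit_interval (principal {x}) x"
      by (simp add: conv_ui pfilter_def principal_le_nhds principal_eq_bot_iff)
  qed
  moreover have "conv unit_interval F x" if a: "pfilter {0..1} F" "x \<in> {0..1}"
      "\<forall>U. ultra U \<and> U \<le> F \<longrightarrow> conv unit_interval U x" for F x
  proof -
    have "F \<le> nhds x"
    proof (rule le_by_ultra)
      fix U assume "ultra U" "U \<le> F"
      then have "conv unit_interval U x" using a(3) by blast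
      then show "U \<le> nhds x" unfolding conv_ui by blast
    qed
    then show ?thesis using a by (simp add: conv_ui)
  qed
  ultimately show ?thesis unfolding pseudotop_def by simp
qed

lemma cs_ui: "convergence_space unit_interval"
  by (rule pt_cs[OF pseudotop_ui])

lemma cs_cyl:
  assumes X: "convergence_space X"
  shows "convergence_space (cyl X)"
proof (rule cs_intro)
  show "\<And>F z. conv (cyl X) F z \<Longrightarrow> pfilter (carrier (cyl X)) F" unfolding conv_cyl by simp
  show "\<And>F z. conv (cyl X) F z \<Longrightarrow> z \<in> carrier (cyl X)" unfolding conv_cyl by simp
next
  fix F F' z assume a: "conv (cyl X) F z" "pfilter (carrier (cyl X)) F'" "F' \<le> F"
  have nb: "F' \<noteq> bot" using a pfilter_nbot by blast
  have "conv X (filtermap fst F') (fst z)"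
    using a cs_conv_mono[OF X, of "filtermap fst F" "fst z" "filtermap fst F'"]
    unfolding conv_cyl by (simp add: filtermap_mono filtermap_bot_iff nb)
  moreover have "conv unit_interval (filtermap snd F') (snd z)"
    using a cs_conv_mono[OF cs_ui, of "filtermap snd F" "snd z" "filtermap snd F'"]
    unfolding conv_cyl by (simp add: filtermap_mono filtermap_bot_iff nb)
  ultimately show "conv (cyl X) F' z" using a unfolding conv_cyl by simp
next
  fix z assume z: "z \<in> carrier (cyl X)"
  then show "conv (cyl X) (principal {z}) z"
    unfolding conv_cyl using cs_conv_pure[OF X, of "fst z"] cs_conv_pure[OF cs_ui, of "snd z"]
    by (auto simp: pfilter_def principal_eq_bot_iff)
qed

lemma pt_cyl:
  assumes X: "pseudotop X"
  shows "pseudotop (cyl X)"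
  unfolding pseudotop_def
proof (intro conjI allI impI)
  show "convergence_space (cyl X)" by (rule cs_cyl[OF pt_cs[OF X]])
  fix F z assume a: "pfilter (carrier (cyl X)) F \<and> z \<in> carrier (cyl X) \<and> (\<forall>U. ultra U \<and> U \<le> F \<longrightarrow> conv (cyl X) U z)"
  have "conv X (filtermap fst F) (fst z)"
  proof (rule pt_ultra[OF X])
    show "pfilter (carrier X) (filtermap fst F)" using a pfilter_fst by auto
    show "fst z \<in> carrier X" using a by auto
    fix V assume V: "ultra V" "V \<le> filtermap fst F"
    obtain W where "ultra W" "W \<le> F" "filtermap fst W = V" using ultra_lift[OF V] by blast
    then show "conv X V (fst z)" using a unfolding conv_cyl by blast
  qed
  moreover have "conv unit_interval (filtermap snd F) (snd z)"
  proof (rule pt_ultra[OF pseudotop_ui])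
    show "pfilter (carrier unit_interval) (filtermap snd F)" using a pfilter_snd by auto
    show "snd z \<in> carrier unit_interval" using a by auto
    fix V assume V: "ultra V" "V \<le> filtermap snd F"
    obtain W where "ultra W" "W \<le> F" "filtermap snd W = V" using ultra_lift[OF V] by blast
    then show "conv unit_interval V (snd z)" using a unfolding conv_cyl by blast
  qed
  ultimately show "conv (cyl X) F z" using a unfolding conv_cyl by simp
qed

lemma cmap_Imap:
  assumes f: "cmap X Y f"
  shows "cmap (cyl X) (cyl Y) (Imap f)"
  unfolding cmap_def
proof (intro conjI allI impI)
  show "Imap f ` carrier (cyl X) \<subseteq> carrier (cyl Y)" using cmapD1[OF f] by (auto simp: Imap_def)
  fix F z assume c: "conv (cyl X) F z"
  have e1: "filtermap fst (filtermap (Imap f) F) = filtermap f (filtermap fst F)"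
    by (simp add: filtermap_filtermap Imap_def)
  have e2: "filtermap snd (filtermap (Imap f) F) = filtermap snd F"
    by (simp add: filtermap_filtermap Imap_def)
  have "pfilter (carrier Y \<times> {0..1}) (filtermap (Imap f) F)"
    using c cmapD1[OF f] unfolding conv_cyl by (auto intro!: pfilter_filtermap simp: Imap_def)
  then show "conv (cyl Y) (filtermap (Imap f) F) (Imap f z)"
    using c cmapD1[OF f] cmapD2[OF f] unfolding conv_cyl e1 e2 by (auto simp: Imap_def)
qed

lemma cmap_proj: "cmap (cyl X) X proj"
  unfolding cmap_def conv_cyl proj_def by auto

lemma cmap_incl:
  assumes X: "convergence_space X" and k: "k \<in> {0..1}"
  shows "cmap X (cyl X) (incl k)"
  unfolding cmap_def
proof (intro conjI allI impI)
  show "incl k ` carrier X \<subseteq> carrier (cyl X)" using k by (auto simp: incl_def)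
  fix F x assume c: "conv X F x"
  have pf: "pfilter (carrier X) F" using cs_conv_pf[OF X c] .
  have e1: "filtermap fst (filtermap (incl k) F) = F"
    by (simp add: filtermap_filtermap incl_def filtermap_ident)
  have "filtermap snd (filtermap (incl k) F) \<le> nhds k"
    unfolding le_filter_def eventually_filtermap incl_def by (auto dest: eventually_nhds_x_imp_x)
  moreover have "pfilter {0..1} (filtermap snd (filtermap (incl k) F))"
    using pf k by (auto intro!: pfilter_filtermap simp: incl_def filtermap_filtermap)
  moreover have "pfilter (carrier X \<times> {0..1}) (filtermap (incl k) F)"
    using pf k by (auto intro!: pfilter_filtermap simp: incl_def)
  ultimately show "conv (cyl X) (filtermap (incl k) F) (incl k x)"
    unfolding conv_cyl conv_ui e1 using c cs_conv_pt[OF X c] k by (simp add: incl_def)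
qed

lemma carrier_sum[simp]: "carrier (sum_space A X) = Inl ` carrier A \<union> Inr ` carrier X"
  unfolding sum_space_def by simp

lemma conv_sum: "conv (sum_space A X) F z \<longleftrightarrow> pfilter (Inl ` carrier A \<union> Inr ` carrier X) F \<and>
       ((\<exists>G a. conv A G a \<and> z = Inl a \<and> F \<le> filtermap Inl G) \<or>
        (\<exists>G x. conv X G x \<and> z = Inr x \<and> F \<le> filtermap Inr G))"
  unfolding sum_space_def by simp

lemma cs_sum:
  assumes A: "convergence_space A" and X: "convergence_space X"
  shows "convergence_space (sum_space A X)"
proof (rule cs_intro)
  show "\<And>F z. conv (sum_space A X) F z \<Longrightarrow> pfilter (carrier (sum_space A X)) F"
    unfolding conv_sum by simp
  show "\<And>F z. conv (sum_space A X) F z \<Longrightarrow> z \<in> carrier (sum_space A X)"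
    unfolding conv_sum using cs_conv_pt[OF A] cs_conv_pt[OF X] by auto
  show "conv (sum_space A X) F' z" if "conv (sum_space A X) F z" "pfilter (carrier (sum_space A X)) F'" "F' \<le> F" for F F' z
    using that unfolding conv_sum carrier_sum by (blast intro: order_trans)
  fix z assume "z \<in> carrier (sum_space A X)"
  then show "conv (sum_space A X) (principal {z}) z"
    unfolding conv_sum using cs_conv_pure[OF A] cs_conv_pure[OF X]
    by (fastforce simp: pfilter_def principal_eq_bot_iff)
qed

lemma cmap_Inl:
  assumes A: "convergence_space A"
  shows "cmap A (sum_space A X) Inl"
  unfolding cmap_def conv_sum using cs_conv_pf[OF A]
  by (auto intro!: pfilter_filtermap)

lemma cmap_Inr:
  assumes X: "convergence_space X"
  shows "cmap X (sum_space A X) Inr"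
  unfolding cmap_def conv_sum using cs_conv_pf[OF X]
  by (auto intro!: pfilter_filtermap)

lemma cmap_case_sum:
  assumes Z: "convergence_space Z" and g: "cmap A Z g" and h: "cmap X Z h"
  shows "cmap (sum_space A X) Z (case_sum g h)"
  unfolding cmap_def
proof (intro conjI allI impI)
  show "case_sum g h ` carrier (sum_space A X) \<subseteq> carrier Z" using cmapD1[OF g] cmapD1[OF h] by auto
  fix F z assume c: "conv (sum_space A X) F z"
  have pf: "pfilter (carrier Z) (filtermap (case_sum g h) F)"
    using c cmapD1[OF g] cmapD1[OF h] unfolding conv_sum by (auto intro!: pfilter_filtermap)
  from c consider (l) G a where "conv A G a" "z = Inl a" "F \<le> filtermap Inl G"
    | (r) G x where "conv X G x" "z = Inr x" "F \<le> filtermap Inr G" unfolding conv_sum by blast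
  then show "conv Z (filtermap (case_sum g h) F) (case_sum g h z)"
  proof cases
    case l
    have "filtermap (case_sum g h) F \<le> filtermap g G"
      using filtermap_mono[OF l(3), of "case_sum g h"] by (simp add: filtermap_filtermap)
    then show ?thesis using cs_conv_mono[OF Z cmapD2[OF g l(1)]] pf pfilter_nbot l(2) by auto
  next
    case r
    have "filtermap (case_sum g h) F \<le> filtermap h G"
      using filtermap_mono[OF r(3), of "case_sum g h"] by (simp add: filtermap_filtermap)
    then show ?thesis using cs_conv_mono[OF Z cmapD2[OF h r(1)]] pf pfilter_nbot r(2) by auto
  qed
qed

lemma prod_le_map:
  assumes "filtermap fst F \<le> filtermap q G"
  shows "F \<le> filtermap (map_prod q id) (G \<times>\<^sub>F filtermap snd F)"
proof -
  have "F \<le> filtermap fst F \<times>\<^sub>F filtermap snd F" by (rule le_prod_filterI) auto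
  also have "\<dots> \<le> filtermap q G \<times>\<^sub>F filtermap snd F" by (rule prod_filter_mono[OF assms order_refl])
  also have "\<dots> \<le> filtermap (map_prod q id) (G \<times>\<^sub>F filtermap snd F)"
    unfolding le_filter_def
  proof (intro allI impI)
    fix P assume "eventually P (filtermap (map_prod q id) (G \<times>\<^sub>F filtermap snd F))"
    then have "eventually (\<lambda>y. P (map_prod q id y)) (G \<times>\<^sub>F filtermap snd F)"
      by (simp add: eventually_filtermap)
    then obtain Pf Pg where "eventually Pf G" and ePg: "eventually Pg (filtermap snd F)"
      and PP: "\<forall>x y. Pf x \<longrightarrow> Pg y \<longrightarrow> P (map_prod q id (x, y))"
      unfolding eventually_prod_filter by blast
    have PP': "\<forall>z y. (\<exists>x. Pf x \<and> z = q x) \<longrightarrow> Pg y \<longrightarrow> P (z, y)" using PP by auto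
    moreover have "eventually (\<lambda>z. \<exists>x. Pf x \<and> z = q x) (filtermap q G)"
      unfolding eventually_filtermap using \<open>eventually Pf G\<close> by (auto elim: eventually_mono)
    ultimately show "eventually P (filtermap q G \<times>\<^sub>F filtermap snd F)"
      unfolding eventually_prod_filter using PP' ePg by blast
  qed
  finally show ?thesis .
qed

lemma conv_cyl_prod:
  assumes X: "convergence_space X" and G: "conv X G s" and H: "conv unit_interval H t"
  shows "conv (cyl X) (G \<times>\<^sub>F H) (s, t)"
proof -
  have pG: "pfilter (carrier X) G" using cs_conv_pf[OF X G] .
  have pH: "pfilter {0..1} H" and tH: "t \<in> {0..1}" and nH: "H \<le> nhds t" using H unfolding conv_ui by auto
  have nb: "G \<times>\<^sub>F H \<noteq> bot" unfolding prod_filter_eq_bot using pfilter_nbot[OF pG] pfilter_nbot[OF pH] by simp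
  have "G \<times>\<^sub>F H \<le> principal (carrier X) \<times>\<^sub>F principal {0..1}"
    using pG pH unfolding pfilter_def by (intro prod_filter_mono) auto
  then have pf: "pfilter (carrier X \<times> {0..1}) (G \<times>\<^sub>F H)"
    using nb unfolding pfilter_def principal_prod_principal by simp
  have "conv X (filtermap fst (G \<times>\<^sub>F H)) s"
    using cs_conv_mono[OF X G filtermap_fst_prod_filter] nb by (simp add: filtermap_bot_iff)
  moreover have "conv unit_interval (filtermap snd (G \<times>\<^sub>F H)) t"
    using cs_conv_mono[OF cs_ui H filtermap_snd_prod_filter] nb by (simp add: filtermap_bot_iff)
  ultimately show ?thesis using pf cs_conv_pt[OF X G] tH unfolding conv_cyl by simp
qed

lemma cyl_sum_univ:
  assumes A: "convergence_space A" and X: "convergence_space X" and Z: "convergence_space Z"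
    and g: "cmap (cyl A) Z g" and h: "cmap (cyl X) Z h"
  shows "cmap (cyl (sum_space A X)) Z (\<lambda>z. case fst z of Inl a \<Rightarrow> g (a, snd z) | Inr x \<Rightarrow> h (x, snd z))"
    (is "cmap _ _ ?k")
  unfolding cmap_def
proof (intro conjI allI impI)
  show "?k ` carrier (cyl (sum_space A X)) \<subseteq> carrier Z"
    using cmapD1[OF g] cmapD1[OF h] by auto
  fix F z assume c: "conv (cyl (sum_space A X)) F z"
  have pf: "pfilter ((Inl ` carrier A \<union> Inr ` carrier X) \<times> {0..1}) F"
    and c1: "conv (sum_space A X) (filtermap fst F) (fst z)"
    and c2: "conv unit_interval (filtermap snd F) (snd z)" using c unfolding conv_cyl by auto
  have pfz: "pfilter (carrier Z) (filtermap ?k F)"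
    using pf cmapD1[OF g] cmapD1[OF h] by (auto intro!: pfilter_filtermap)
  from c1 consider (l) G a where "conv A G a" "fst z = Inl a" "filtermap fst F \<le> filtermap Inl G"
    | (r) G x where "conv X G x" "fst z = Inr x" "filtermap fst F \<le> filtermap Inr G" unfolding conv_sum by blast
  then show "conv Z (filtermap ?k F) (?k z)"
  proof cases
    case l
    have "filtermap ?k F \<le> filtermap ?k (filtermap (map_prod Inl id) (G \<times>\<^sub>F filtermap snd F))"
      by (rule filtermap_mono[OF prod_le_map[OF l(3)]])
    also have "\<dots> = filtermap g (G \<times>\<^sub>F filtermap snd F)"
      by (simp add: filtermap_filtermap map_prod_def split_def)
    finally have le: "filtermap ?k F \<le> filtermap g (G \<times>\<^sub>F filtermap snd F)" .
    have "conv Z (filtermap g (G \<times>\<^sub>F filtermap snd F)) (g (a, snd z))"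
      using cmapD2[OF g conv_cyl_prod[OF A l(1) c2]] .
    then show ?thesis using cs_conv_mono[OF Z _ le pfilter_nbot[OF pfz]] l(2) by simp
  next
    case r
    have "filtermap ?k F \<le> filtermap ?k (filtermap (map_prod Inr id) (G \<times>\<^sub>F filtermap snd F))"
      by (rule filtermap_mono[OF prod_le_map[OF r(3)]])
    also have "\<dots> = filtermap h (G \<times>\<^sub>F filtermap snd F)"
      by (simp add: filtermap_filtermap map_prod_def split_def)
    finally have le: "filtermap ?k F \<le> filtermap h (G \<times>\<^sub>F filtermap snd F)" .
    have "conv Z (filtermap h (G \<times>\<^sub>F filtermap snd F)) (h (x, snd z))"
      using cmapD2[OF h conv_cyl_prod[OF X r(1) c2]] .
    then show ?thesis using cs_conv_mono[OF Z _ le pfilter_nbot[OF pfz]] r(2) by simp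
  qed
qed

lemma cyl_final_univ:
  assumes S: "convergence_space S" and Z: "pseudotop Z" and g: "cmap (cyl S) Z g"
    and fib: "\<And>s s' t. s \<in> carrier S \<Longrightarrow> s' \<in> carrier S \<Longrightarrow> t \<in> {0..1} \<Longrightarrow> q s = q s' \<Longrightarrow> g (s, t) = g (s', t)"
  shows "\<exists>w. cmap (cyl (final_space S q)) Z w \<and> (\<forall>s\<in>carrier S. \<forall>t\<in>{0..1}. w (q s, t) = g (s, t))"
proof -
  define w where "w z = g (SOME s. s \<in> carrier S \<and> q s = fst z, snd z)" for z
  have wq: "w (q s, t) = g (s, t)" if "s \<in> carrier S" "t \<in> {0..1}" for s t
  proof -
    have "\<exists>s'. s' \<in> carrier S \<and> q s' = q s" using that by blast
    then have "(SOME s'. s' \<in> carrier S \<and> q s' = q s) \<in> carrier S \<and> q (SOME s'. s' \<in> carrier S \<and> q s' = q s) = q s"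
      by (rule someI_ex)
    then have "g (SOME s'. s' \<in> carrier S \<and> q s' = q s, t) = g (s, t)"
      using fib that by blast
    then show ?thesis unfolding w_def by simp
  qed
  have wc: "w ` carrier (cyl (final_space S q)) \<subseteq> carrier Z"
  proof
    fix y assume "y \<in> w ` carrier (cyl (final_space S q))"
    then obtain z where z: "z \<in> carrier (final_space S q) \<times> {0..1}" "y = w z" by auto
    then obtain s where s: "s \<in> carrier S" "fst z = q s" unfolding final_space_def by auto
    have "y = g (s, snd z)" using wq[OF s(1), of "snd z"] z s by (cases z) auto
    moreover have "(s, snd z) \<in> carrier (cyl S)" using s z by auto
    ultimately show "y \<in> carrier Z" using cmapD1[OF g] by simp
  qed
  have csF: "convergence_space (cyl (final_space S q))" by (rule cs_cyl[OF pt_cs[OF pseudotop_final[OF S]]])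
  have "cmap (cyl (final_space S q)) Z w"
    unfolding cmap_def
  proof (intro conjI allI impI)
    show "w ` carrier (cyl (final_space S q)) \<subseteq> carrier Z" by (rule wc)
    fix F z assume c: "conv (cyl (final_space S q)) F z"
    have pf: "pfilter (carrier (cyl (final_space S q))) F" and zc: "z \<in> carrier (cyl (final_space S q))"
      using cs_conv_pf[OF csF c] cs_conv_pt[OF csF c] by auto
    have pfz: "pfilter (carrier Z) (filtermap w F)" using pf wc by (auto intro: pfilter_filtermap)
    show "conv Z (filtermap w F) (w z)"
    proof (rule pt_ultra[OF Z pfz])
      show "w z \<in> carrier Z" using zc wc by auto
      fix V assume V: "ultra V" "V \<le> filtermap w F"
      obtain W where W: "ultra W" "W \<le> F" "filtermap w W = V" using ultra_lift[OF V] by blast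
      have cW: "conv (cyl (final_space S q)) W z" using cs_conv_mono[OF csF c W(2) ultra_nbot[OF W(1)]] .
      then have c1: "conv (final_space S q) (filtermap fst W) (fst z)"
        and c2: "conv unit_interval (filtermap snd W) (snd z)" unfolding conv_cyl by auto
      have "ultra (filtermap fst W)" by (rule ultra_filtermap[OF W(1)])
      then obtain G s where G: "conv S G s" "q s = fst z" "filtermap fst W \<le> filtermap q G"
        using c1 unfolding final_space_def by auto
      have s: "s \<in> carrier S" using cs_conv_pt[OF S G(1)] .
      have t: "snd z \<in> {0..1}" using c2 unfolding conv_ui by simp
      let ?P = "G \<times>\<^sub>F filtermap snd W"
      have cP: "conv (cyl S) ?P (s, snd z)" by (rule conv_cyl_prod[OF S G(1) c2])
      have evP: "eventually (\<lambda>y. y \<in> carrier S \<times> {0..1}) ?P"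
        using cs_conv_pf[OF cs_cyl[OF S] cP] unfolding pfilter_def le_principal by simp
      have "filtermap w W \<le> filtermap w (filtermap (map_prod q id) ?P)"
        by (rule filtermap_mono[OF prod_le_map[OF G(3)]])
      also have "\<dots> = filtermap (\<lambda>y. w (map_prod q id y)) ?P" by (simp add: filtermap_filtermap)
      also have "\<dots> = filtermap g ?P"
      proof (rule filtermap_cong_ev)
        show "eventually (\<lambda>y. w (map_prod q id y) = g y) ?P"
          using evP by (rule eventually_mono) (use wq in auto)
      qed
      finally have le: "V \<le> filtermap g ?P" using W(3) by simp
      have "conv Z (filtermap g ?P) (g (s, snd z))" using cmapD2[OF g cP] .
      moreover have "g (s, snd z) = w z" using wq[OF s t] G(2) by (cases z) simp
      ultimately show "conv Z V (w z)"
        using cs_conv_mono[OF pt_cs[OF Z] _ le ultra_nbot[OF V(1)]] by simp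
    qed
  qed
  then show ?thesis using wq by blast
qed

lemma isCont_UNIV: "continuous_on UNIV f \<Longrightarrow> isCont f x"
  using continuous_on_eq_continuous_at[of UNIV f] by simp

lemma cmap_reparam1:
  assumes X: "convergence_space X" and l: "continuous_on UNIV (l :: real \<Rightarrow> real)" and lI: "\<And>u. u \<in> {0..1} \<Longrightarrow> l u \<in> {0..1}"
  shows "cmap (cyl X) (cyl X) (\<lambda>z. (fst z, l (snd z)))"
  unfolding cmap_def
proof (intro conjI allI impI)
  have im: "(\<lambda>z. (fst z, l (snd z))) ` (carrier X \<times> {0..1}) \<subseteq> carrier X \<times> {0..1}"
  proof
    fix y assume "y \<in> (\<lambda>z. (fst z, l (snd z))) ` (carrier X \<times> {0..1})"
    then obtain z where "z \<in> carrier X \<times> {0..1}" "y = (fst z, l (snd z))" by blast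
    then show "y \<in> carrier X \<times> {0..1}" using lI[of "snd z"] by (simp add: mem_Times_iff)
  qed
  then show "(\<lambda>z. (fst z, l (snd z))) ` carrier (cyl X) \<subseteq> carrier (cyl X)" by simp
  fix F z assume c: "conv (cyl X) F z"
  have pf: "pfilter (carrier X \<times> {0..1}) F" and c1: "conv X (filtermap fst F) (fst z)"
    and c2: "conv unit_interval (filtermap snd F) (snd z)" and zc: "z \<in> carrier X \<times> {0..1}"
    using c unfolding conv_cyl by auto
  have pf': "pfilter (carrier X \<times> {0..1}) (filtermap (\<lambda>z. (fst z, l (snd z))) F)"
    by (rule pfilter_filtermap[OF pf im])
  have "filtermap snd F \<le> nhds (snd z)" using c2 unfolding conv_ui by simp
  then have "(snd \<longlongrightarrow> snd z) F" unfolding filterlim_def .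
  then have "((\<lambda>y. l (snd y)) \<longlongrightarrow> l (snd z)) F" by (rule isCont_tendsto_compose[OF isCont_UNIV[OF l]])
  then have n: "filtermap (\<lambda>y. l (snd y)) F \<le> nhds (l (snd z))" unfolding filterlim_def .
  have lz: "l (snd z) \<in> {0..1}" using lI zc by (simp add: mem_Times_iff)
  have e2: "filtermap snd (filtermap (\<lambda>z. (fst z, l (snd z))) F) = filtermap (\<lambda>y. l (snd y)) F"
    by (simp add: filtermap_filtermap)
  have "conv unit_interval (filtermap snd (filtermap (\<lambda>z. (fst z, l (snd z))) F)) (l (snd z))"
    unfolding conv_ui using pfilter_snd[OF pf'] n lz e2 by simp
  moreover have "filtermap fst (filtermap (\<lambda>z. (fst z, l (snd z))) F) = filtermap fst F"
    by (simp add: filtermap_filtermap)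
  moreover have "(fst z, l (snd z)) \<in> carrier X \<times> {0..1}" using zc lz by (simp add: mem_Times_iff)
  ultimately show "conv (cyl X) (filtermap (\<lambda>z. (fst z, l (snd z))) F) (fst z, l (snd z))"
    using pf' c1 unfolding conv_cyl by simp
qed

lemma cmap_reparam2:
  assumes X: "convergence_space X" and al: "continuous_on UNIV (al :: real \<times> real \<Rightarrow> real)"
    and be: "continuous_on UNIV (be :: real \<times> real \<Rightarrow> real)"
    and alI: "\<And>u v. u \<in> {0..1} \<Longrightarrow> v \<in> {0..1} \<Longrightarrow> al (u, v) \<in> {0..1}"
    and beI: "\<And>u v. u \<in> {0..1} \<Longrightarrow> v \<in> {0..1} \<Longrightarrow> be (u, v) \<in> {0..1}"
  shows "cmap (cyl (cyl X)) (cyl (cyl X))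
     (\<lambda>z. ((fst (fst z), al (snd (fst z), snd z)), be (snd (fst z), snd z)))" (is "cmap _ _ ?m")
  unfolding cmap_def
proof (intro conjI allI impI)
  show "?m ` carrier (cyl (cyl X)) \<subseteq> carrier (cyl (cyl X))" using alI beI by auto
  fix F z assume c: "conv (cyl (cyl X)) F z"
  have pf: "pfilter ((carrier X \<times> {0..1}) \<times> {0..1}) F" and c1: "conv (cyl X) (filtermap fst F) (fst z)"
    and c2: "conv unit_interval (filtermap snd F) (snd z)" and zc: "z \<in> (carrier X \<times> {0..1}) \<times> {0..1}"
    using c unfolding conv_cyl by auto
  have c11: "conv X (filtermap fst (filtermap fst F)) (fst (fst z))"
    and c12: "conv unit_interval (filtermap snd (filtermap fst F)) (snd (fst z))"
    using c1 unfolding conv_cyl by auto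
  have pf': "pfilter ((carrier X \<times> {0..1}) \<times> {0..1}) (filtermap ?m F)"
    using pf alI beI by (auto intro!: pfilter_filtermap)
  have "((\<lambda>y. snd (fst y)) \<longlongrightarrow> snd (fst z)) F"
    using c12 unfolding conv_ui filterlim_def by (simp add: filtermap_filtermap)
  moreover have "(snd \<longlongrightarrow> snd z) F" using c2 unfolding conv_ui filterlim_def by simp
  ultimately have P: "((\<lambda>y. (snd (fst y), snd y)) \<longlongrightarrow> (snd (fst z), snd z)) F" by (rule tendsto_Pair)
  have na: "filtermap (\<lambda>y. al (snd (fst y), snd y)) F \<le> nhds (al (snd (fst z), snd z))"
    using isCont_tendsto_compose[OF isCont_UNIV[OF al] P] unfolding filterlim_def .
  have nb: "filtermap (\<lambda>y. be (snd (fst y), snd y)) F \<le> nhds (be (snd (fst z), snd z))"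
    using isCont_tendsto_compose[OF isCont_UNIV[OF be] P] unfolding filterlim_def .
  have pfm1: "pfilter (carrier X \<times> {0..1}) (filtermap fst (filtermap ?m F))" using pfilter_fst[OF pf'] .
  have zz: "fst (fst z) \<in> carrier X" "snd (fst z) \<in> {0..1}" "snd z \<in> {0..1}" using zc by auto
  have "conv (cyl X) (filtermap fst (filtermap ?m F)) (fst (?m z))"
    unfolding conv_cyl
    using pfm1 c11 zz alI[OF zz(2,3)] pfilter_snd[OF pfm1] na
    by (simp add: filtermap_filtermap conv_ui)
  moreover have "conv unit_interval (filtermap snd (filtermap ?m F)) (snd (?m z))"
    unfolding conv_ui using pfilter_snd[OF pf'] nb beI[OF zz(2,3)]
    by (simp add: filtermap_filtermap)
  ultimately show "conv (cyl (cyl X)) (filtermap ?m F) (?m z)"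
    using pf' zc alI[OF zz(2,3)] beI[OF zz(2,3)] unfolding conv_cyl[of "cyl X"] by auto
qed

lemma pasting:
  assumes X: "convergence_space X" and Y: "pseudotop Y"
    and h1: "cmap (cyl X) Y h1" and h2: "cmap (cyl X) Y h2"
    and e1: "\<And>x u. x \<in> carrier X \<Longrightarrow> u \<in> {0..c} \<Longrightarrow> h (x, u) = h1 (x, u)"
    and e2: "\<And>x u. x \<in> carrier X \<Longrightarrow> u \<in> {c..1} \<Longrightarrow> h (x, u) = h2 (x, u)"
  shows "cmap (cyl X) Y h"
  unfolding cmap_def
proof (intro conjI allI impI)
  have hc: "h z \<in> carrier Y" if "z \<in> carrier (cyl X)" for z
  proof (cases "snd z \<le> c")
    case True
    then show ?thesis using e1[of "fst z" "snd z"] cmapD1[OF h1 that] that by (cases z) auto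
  next
    case False
    then show ?thesis using e2[of "fst z" "snd z"] cmapD1[OF h2 that] that by (cases z) auto
  qed
  then show "h ` carrier (cyl X) \<subseteq> carrier Y" by auto
  fix F z assume c: "conv (cyl X) F z"
  have csX: "convergence_space (cyl X)" by (rule cs_cyl[OF X])
  have pf: "pfilter (carrier (cyl X)) F" and zc: "z \<in> carrier (cyl X)"
    using cs_conv_pf[OF csX c] cs_conv_pt[OF csX c] by auto
  have pfz: "pfilter (carrier Y) (filtermap h F)" using pf hc by (auto intro: pfilter_filtermap)
  show "conv Y (filtermap h F) (h z)"
  proof (rule pt_ultra[OF Y pfz hc[OF zc]])
    fix V assume V: "ultra V" "V \<le> filtermap h F"
    obtain W where W: "ultra W" "W \<le> F" "filtermap h W = V" using ultra_lift[OF V] by blast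
    have cW: "conv (cyl X) W z" using cs_conv_mono[OF csX c W(2) ultra_nbot[OF W(1)]] .
    have evW: "eventually (\<lambda>y. y \<in> carrier (cyl X)) W" using cs_conv_pf[OF csX cW] unfolding pfilter_def le_principal by simp
    have tW: "(snd \<longlongrightarrow> snd z) W" using cW unfolding conv_cyl conv_ui filterlim_def by simp
    have Wnb: "W \<noteq> bot" using ultra_nbot[OF W(1)] .
    from W(1) have "eventually (\<lambda>y. snd y \<le> c) W \<or> eventually (\<lambda>y. \<not> snd y \<le> c) W" unfolding ultra_iff by blast
    then show "conv Y V (h z)"
    proof
      assume ev: "eventually (\<lambda>y. snd y \<le> c) W"
      have "snd z \<le> c" using tendsto_upperbound[OF tW ev Wnb] .
      then have "h z = h1 z" using e1[of "fst z" "snd z"] zc by (cases z) auto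
      moreover have "filtermap h W = filtermap h1 W"
      proof (rule filtermap_cong_ev)
        show "eventually (\<lambda>y. h y = h1 y) W"
          using ev evW by eventually_elim (use e1 in force)
      qed
      ultimately show ?thesis using cmapD2[OF h1 cW] W(3) by simp
    next
      assume ev: "eventually (\<lambda>y. \<not> snd y \<le> c) W"
      then have ev': "eventually (\<lambda>y. c \<le> snd y) W" by (auto elim: eventually_mono)
      have "c \<le> snd z" using tendsto_lowerbound[OF tW ev' Wnb] .
      then have "h z = h2 z" using e2[of "fst z" "snd z"] zc by (cases z) auto
      moreover have "filtermap h W = filtermap h2 W"
      proof (rule filtermap_cong_ev)
        show "eventually (\<lambda>y. h y = h2 y) W"
          using ev' evW by eventually_elim (use e2 in force)
      qed
      ultimately show ?thesis using cmapD2[OF h2 cW] W(3) by simp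
    qed
  qed
qed

definition mcq :: "('b \<Rightarrow> 'a) \<Rightarrow> real \<Rightarrow> 'a + 'b \<times> real \<Rightarrow> 'a + 'b \<times> real" where
  "mcq i k s = (case s of Inl a \<Rightarrow> Inl a | Inr z \<Rightarrow> if snd z = k then Inl (i (fst z)) else Inr z)"

lemma mcq_simps[simp]: "mcq i k (Inl a) = Inl a" "mcq i k (Inr (b, t)) = (if t = k then Inl (i b) else Inr (b, t))"
  unfolding mcq_def by auto

lemma cof_D: "cof B A i \<Longrightarrow> pseudotop B \<and> pseudotop A \<and> cmap B A i \<and> hep TYPE('a + 'b \<times> real) B A (i :: 'b \<Rightarrow> 'a)"
  unfolding cof_def by simp

lemma mc_retract:
  assumes c: "cof B A (i :: 'b \<Rightarrow> 'a)" and k: "k \<in> {0, 1::real}"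
  shows "\<exists>R. cmap (cyl A) (final_space (sum_space A (cyl B)) (mcq i k)) R \<and>
     (\<forall>a\<in>carrier A. R (a, k) = Inl a) \<and>
     (\<forall>b\<in>carrier B. \<forall>t\<in>{0..1}. R (i b, t) = mcq i k (Inr (b, t)))"
proof -
  have B: "pseudotop B" and A: "pseudotop A" and i: "cmap B A i" and h: "hep TYPE('a + 'b \<times> real) B A i"
    using cof_D[OF c] by auto
  let ?S = "sum_space A (cyl B)"
  let ?M = "final_space ?S (mcq i k)"
  have csS: "convergence_space ?S" by (rule cs_sum[OF pt_cs[OF A] cs_cyl[OF pt_cs[OF B]]])
  have M: "pseudotop ?M" by (rule pseudotop_final[OF csS])
  have q: "cmap ?S ?M (mcq i k)" by (rule cmap_final_q[OF csS])
  have f: "cmap A ?M (\<lambda>a. mcq i k (Inl a))" by (rule cmap_comp'[OF cmap_Inl[OF pt_cs[OF A]] q])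
  have G: "cmap (cyl B) ?M (\<lambda>z. mcq i k (Inr z))" by (rule cmap_comp'[OF cmap_Inr[OF cs_cyl[OF pt_cs[OF B]]] q])
  have compat: "\<forall>b\<in>carrier B. mcq i k (Inl (i b)) = mcq i k (Inr (incl k b))"
    by (simp add: incl_def)
  from h k M f G compat obtain H where H: "cmap (cyl A) ?M H"
    "\<forall>a\<in>carrier A. H (incl k a) = mcq i k (Inl a)"
    "\<forall>z\<in>carrier (cyl B). H (Imap i z) = mcq i k (Inr z)"
    unfolding hep_def by blast
  show ?thesis
    using H by (intro exI[of _ H]) (auto simp: incl_def Imap_def)
qed

lemma mcq_fib:
  assumes s: "s \<in> carrier (sum_space A (cyl B))" and s': "s' \<in> carrier (sum_space A (cyl B))"
    and e: "mcq i k s = mcq i k s'"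
    and h1: "\<And>b. b \<in> carrier B \<Longrightarrow> P (Inl (i b)) = P (Inr (b, k))"
    and h2: "\<And>b b'. b \<in> carrier B \<Longrightarrow> b' \<in> carrier B \<Longrightarrow> i b = i b' \<Longrightarrow> P (Inr (b, k)) = P (Inr (b', k))"
  shows "P s = P s'"
proof -
  have cs0: "x \<in> carrier (sum_space A (cyl B)) \<Longrightarrow> (\<exists>a. x = Inl a) \<or> (\<exists>b t. x = Inr (b, t) \<and> b \<in> carrier B)" for x
    unfolding carrier_sum carrier_cyl by blast
  have cs: "(\<exists>a. s = Inl a) \<or> (\<exists>b t. s = Inr (b, t) \<and> b \<in> carrier B)" by (rule cs0[OF s])
  have cs': "(\<exists>a. s' = Inl a) \<or> (\<exists>b t. s' = Inr (b, t) \<and> b \<in> carrier B)" by (rule cs0[OF s'])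
  show ?thesis
  proof (cases "\<exists>a. s = Inl a")
    case True
    then obtain a where a: "s = Inl a" by blast
    show ?thesis
    proof (cases "\<exists>a'. s' = Inl a'")
      case True
      then obtain a' where "s' = Inl a'" by blast
      then show ?thesis using a e by simp
    next
      case False
      then obtain b t where bt: "s' = Inr (b, t)" "b \<in> carrier B" using cs' by blast
      then have "t = k \<and> a = i b" using a e by (cases "t = k") simp_all
      then show ?thesis using a bt h1[OF bt(2)] by simp
    qed
  next
    case False
    then obtain b t where bt: "s = Inr (b, t)" "b \<in> carrier B" using cs by blast
    show ?thesis
    proof (cases "\<exists>a'. s' = Inl a'")
      case True
      then obtain a' where a': "s' = Inl a'" by blast
      then have "t = k \<and> a' = i b" using bt e by (cases "t = k") simp_all
      then show ?thesis using a' bt h1[OF bt(2)] by simp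
    next
      case False
      then obtain b' t' where bt': "s' = Inr (b', t')" "b' \<in> carrier B" using cs' by blast
      show ?thesis
      proof (cases "t = k")
        case True
        then have "t' = k \<and> i b = i b'" using bt bt' e by (cases "t' = k") simp_all
        then show ?thesis using bt bt' h2[OF bt(2) bt'(2)] True by simp
      next
        case False
        then have "t' = t \<and> b' = b" using bt bt' e by (cases "t' = k") simp_all
        then show ?thesis using bt bt' by simp
      qed
    qed
  qed
qed

lemma hep_general:
  assumes c: "cof B A (i :: 'b \<Rightarrow> 'a)"
  shows "hep TYPE('y) B A i"
  unfolding hep_def
proof (intro ballI allI impI)
  fix k :: real and Y :: "'y cspace" and f G
  assume k: "k \<in> {0, 1}" and a: "pseudotop Y \<and> cmap A Y f \<and> cmap (cyl B) Y G \<and> (\<forall>b\<in>carrier B. f (i b) = G (incl k b))"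
  have B: "pseudotop B" and A: "pseudotop A" and i: "cmap B A i" using cof_D[OF c] by auto
  have Y: "pseudotop Y" and f: "cmap A Y f" and G: "cmap (cyl B) Y G"
    and cp: "\<And>b. b \<in> carrier B \<Longrightarrow> f (i b) = G (b, k)" using a by (auto simp: incl_def)
  let ?S = "sum_space A (cyl B)"
  have csS: "convergence_space ?S" by (rule cs_sum[OF pt_cs[OF A] cs_cyl[OF pt_cs[OF B]]])
  obtain R where R: "cmap (cyl A) (final_space ?S (mcq i k)) R" "\<forall>a\<in>carrier A. R (a, k) = Inl a"
    "\<forall>b\<in>carrier B. \<forall>t\<in>{0..1}. R (i b, t) = mcq i k (Inr (b, t))"
    using mc_retract[OF c k] by blast
  have g: "cmap ?S Y (case_sum f G)" by (rule cmap_case_sum[OF pt_cs[OF Y] f G])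
  have fib: "case_sum f G s = case_sum f G s'" if "s \<in> carrier ?S" "s' \<in> carrier ?S" "mcq i k s = mcq i k s'" for s s'
  proof (rule mcq_fib[OF that])
    show "\<And>b. b \<in> carrier B \<Longrightarrow> case_sum f G (Inl (i b)) = case_sum f G (Inr (b, k))" using cp by simp
    show "\<And>b b'. b \<in> carrier B \<Longrightarrow> b' \<in> carrier B \<Longrightarrow> i b = i b' \<Longrightarrow> case_sum f G (Inr (b, k)) = case_sum f G (Inr (b', k))"
    proof -
      fix b b' assume "b \<in> carrier B" "b' \<in> carrier B" "i b = i b'"
      then have "G (b, k) = G (b', k)" using cp[of b] cp[of b'] by simp
      then show "case_sum f G (Inr (b, k)) = case_sum f G (Inr (b', k))" by simp
    qed
  qed
  obtain w where w: "cmap (final_space ?S (mcq i k)) Y w" "\<forall>s\<in>carrier ?S. w (mcq i k s) = case_sum f G s"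
    using final_univ[OF csS Y g fib] by blast
  have k01: "k \<in> {0..1}" using k by auto
  show "\<exists>H. cmap (cyl A) Y H \<and> (\<forall>a\<in>carrier A. H (incl k a) = f a) \<and> (\<forall>z\<in>carrier (cyl B). H (Imap i z) = G z)"
  proof (intro exI[of _ "\<lambda>z. w (R z)"] conjI ballI)
    show "cmap (cyl A) Y (\<lambda>z. w (R z))" by (rule cmap_comp'[OF R(1) w(1)])
    fix a assume a: "a \<in> carrier A"
    have "Inl a \<in> carrier ?S" using a by simp
    from w(2)[rule_format, OF this] have "w (Inl a) = f a" by simp
    then show "w (R (incl k a)) = f a" using R(2) a by (simp add: incl_def)
  next
    fix z assume z: "z \<in> carrier (cyl B)"
    then obtain b t where bt: "z = (b, t)" "b \<in> carrier B" "t \<in> {0..1}" by auto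
    have "Inr (b, t) \<in> carrier ?S" using bt by simp
    from w(2)[rule_format, OF this] have "w (mcq i k (Inr (b, t))) = G (b, t)" by simp
    then show "w (R (Imap i z)) = G z" using R(3) bt by (simp add: Imap_def)
  qed
qed

lemma hep_cyl0:
  assumes c: "cof B A (i :: 'b \<Rightarrow> 'a)" and Y: "pseudotop (Y :: 'y cspace)"
    and F0: "cmap (cyl A) Y F0" and G0: "cmap (cyl (cyl B)) Y G0"
    and cp: "\<And>b u. b \<in> carrier B \<Longrightarrow> u \<in> {0..1} \<Longrightarrow> F0 (i b, u) = G0 ((b, u), 0)"
  shows "\<exists>K. cmap (cyl (cyl A)) Y K \<and> (\<forall>a\<in>carrier A. \<forall>u\<in>{0..1}. K ((a, u), 0) = F0 (a, u)) \<and>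
     (\<forall>b\<in>carrier B. \<forall>u\<in>{0..1}. \<forall>v\<in>{0..1}. K ((i b, u), v) = G0 ((b, u), v))"
proof -
  have B: "pseudotop B" and A: "pseudotop A" and i: "cmap B A i" using cof_D[OF c] by auto
  let ?S = "sum_space A (cyl B)"
  let ?M = "final_space ?S (mcq i 0)"
  have csS: "convergence_space ?S" by (rule cs_sum[OF pt_cs[OF A] cs_cyl[OF pt_cs[OF B]]])
  obtain R where R: "cmap (cyl A) ?M R" "\<forall>a\<in>carrier A. R (a, 0) = Inl a"
    "\<forall>b\<in>carrier B. \<forall>t\<in>{0..1}. R (i b, t) = mcq i 0 (Inr (b, t))"
    using mc_retract[OF c, of 0] by auto
  have sw: "cmap (cyl (cyl X)) (cyl (cyl X)) (\<lambda>z. ((fst (fst z), snd z), snd (fst z)))"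
    if "convergence_space X" for X :: "'c cspace"
  proof -
    have "cmap (cyl (cyl X)) (cyl (cyl X)) (\<lambda>z. ((fst (fst z), snd (snd (fst z), snd z)), fst (snd (fst z), snd z)))"
      by (rule cmap_reparam2[OF that]) (auto intro: continuous_on_snd continuous_on_fst continuous_on_id)
    then show ?thesis by simp
  qed
  have h: "cmap (cyl (cyl B)) Y (\<lambda>z. G0 ((fst (fst z), snd z), snd (fst z)))"
    by (rule cmap_comp'[OF sw[OF pt_cs[OF B]] G0])
  let ?g = "\<lambda>z. case fst z of Inl a \<Rightarrow> F0 (a, snd z) | Inr y \<Rightarrow> G0 ((fst y, snd z), snd y)"
  have geq: "(\<lambda>z. case fst z of Inl a \<Rightarrow> F0 (a, snd z) | Inr x \<Rightarrow> G0 ((fst (fst (x, snd z)), snd (x, snd z)), snd (fst (x, snd z)))) = ?g"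
    by (rule ext) (simp split: sum.split)
  have g: "cmap (cyl ?S) Y ?g"
    using cyl_sum_univ[OF pt_cs[OF A] cs_cyl[OF pt_cs[OF B]] pt_cs[OF Y] F0 h] unfolding geq .
  have fib: "?g (s, t) = ?g (s', t)" if "s \<in> carrier ?S" "s' \<in> carrier ?S" "t \<in> {0..1}" "mcq i 0 s = mcq i 0 s'" for s s' t
  proof (rule mcq_fib[OF that(1,2,4), where P = "\<lambda>s. ?g (s, t)"])
    show "\<And>b. b \<in> carrier B \<Longrightarrow> ?g (Inl (i b), t) = ?g (Inr (b, 0), t)" using cp that(3) by simp
    show "\<And>b b'. b \<in> carrier B \<Longrightarrow> b' \<in> carrier B \<Longrightarrow> i b = i b' \<Longrightarrow> ?g (Inr (b, 0), t) = ?g (Inr (b', 0), t)"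
    proof -
      fix b b' assume "b \<in> carrier B" "b' \<in> carrier B" "i b = i b'"
      then have "F0 (i b, t) = G0 ((b, t), 0)" "F0 (i b', t) = G0 ((b', t), 0)"
        using cp[of b t] cp[of b' t] that(3) by blast+
      then show "?g (Inr (b, 0), t) = ?g (Inr (b', 0), t)" using \<open>i b = i b'\<close> by simp
    qed
  qed
  obtain W where W: "cmap (cyl ?M) Y W" "\<forall>s\<in>carrier ?S. \<forall>t\<in>{0..1}. W (mcq i 0 s, t) = ?g (s, t)"
    using cyl_final_univ[OF csS Y g fib] by blast
  let ?K = "\<lambda>z. W (R (fst (fst z), snd z), snd (fst z))"
  have k1: "cmap (cyl (cyl A)) Y ?K"
  proof -
    have "cmap (cyl (cyl A)) (cyl ?M) (\<lambda>z. Imap R ((fst (fst z), snd z), snd (fst z)))"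
      by (rule cmap_comp'[OF sw[OF pt_cs[OF A]] cmap_Imap[OF R(1)]])
    then have "cmap (cyl (cyl A)) (cyl ?M) (\<lambda>z. (R (fst (fst z), snd z), snd (fst z)))"
      by (simp add: Imap_def)
    then show ?thesis by (rule cmap_comp'[OF _ W(1)])
  qed
  have k2: "\<forall>a\<in>carrier A. \<forall>u\<in>{0..1}. ?K ((a, u), 0) = F0 (a, u)"
  proof (intro ballI)
    fix a u assume a: "a \<in> carrier A" and u: "u \<in> {0..1::real}"
    have "Inl a \<in> carrier ?S" using a by simp
    from W(2)[rule_format, OF this u] have "W (mcq i 0 (Inl a), u) = F0 (a, u)" by simp
    then show "?K ((a, u), 0) = F0 (a, u)" using R(2) a by simp
  qed
  have k3: "\<forall>b\<in>carrier B. \<forall>u\<in>{0..1}. \<forall>v\<in>{0..1}. ?K ((i b, u), v) = G0 ((b, u), v)"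
  proof (intro ballI)
    fix b u v assume b: "b \<in> carrier B" and u: "u \<in> {0..1::real}" and v: "v \<in> {0..1::real}"
    have "Inr (b, v) \<in> carrier ?S" using b v by simp
    from W(2)[rule_format, OF this u] have "W (mcq i 0 (Inr (b, v)), u) = G0 ((b, u), v)" by simp
    then show "?K ((i b, u), v) = G0 ((b, u), v)" using R(3) b v by simp
  qed
  show ?thesis by (rule exI[of _ ?K]) (intro conjI k1 k2 k3)
qed

lemma glue_final: "glue S E = final_space S (gcls S E)"
  unfolding glue_def gcls_def quotient_space_final by (simp add: fun_eq_iff)

lemma carrier_glue: "carrier (glue S E) = gcls S E ` carrier S"
  unfolding glue_final final_space_def by simp

lemma glue_rel_sym: "sym (glue_rel S E)"
  unfolding glue_rel_def by (rule sym_rtrancl) (auto simp: sym_def)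

lemma gcls_eq_rel: "(x, y) \<in> glue_rel S E \<Longrightarrow> gcls S E x = gcls S E y"
proof -
  assume xy: "(x, y) \<in> glue_rel S E"
  have yx: "(y, x) \<in> glue_rel S E" using glue_rel_sym[of S E] xy unfolding sym_def by blast
  have tr: "trans (glue_rel S E)" unfolding glue_rel_def by (rule trans_rtrancl)
  show ?thesis unfolding gcls_def using xy yx tr unfolding trans_def by blast
qed

lemma gcls_eq: "(x, y) \<in> E \<Longrightarrow> gcls S E x = gcls S E y"
  by (rule gcls_eq_rel) (auto simp: glue_rel_def)

lemma gcls_eq_imp: "gcls S E x = gcls S E y \<Longrightarrow> (x, y) \<in> glue_rel S E"
  unfolding gcls_def glue_rel_def by blast

lemma glue_rel_inv:
  assumes "(x, y) \<in> glue_rel S E" and "\<And>u v. (u, v) \<in> E \<Longrightarrow> P u = P v"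
  shows "P x = P y"
  using assms(1) unfolding glue_rel_def
proof (induction rule: rtrancl_induct)
  case base
  then show ?case by simp
next
  case (step y z)
  then show ?case using assms(2) by (auto simp: Id_on_def)
qed

lemma pt_glue: "convergence_space S \<Longrightarrow> pseudotop (glue S E)"
  unfolding glue_final by (rule pseudotop_final)

lemma cmap_gcls: "convergence_space S \<Longrightarrow> cmap S (glue S E) (gcls S E)"
  unfolding glue_final by (rule cmap_final_q)

lemma glue_univ:
  assumes S: "convergence_space S" and Z: "pseudotop Z" and g: "cmap S Z g"
    and inv: "\<And>u v. (u, v) \<in> E \<Longrightarrow> g u = g v"
  shows "\<exists>w. cmap (glue S E) Z w \<and> (\<forall>s\<in>carrier S. w (gcls S E s) = g s)"
  unfolding glue_final
proof (rule final_univ[OF S Z g])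
  fix s s' assume "gcls S E s = gcls S E s'"
  then have "(s, s') \<in> glue_rel S E" by (rule gcls_eq_imp)
  then show "g s = g s'" by (rule glue_rel_inv) (rule inv)
qed

lemma cyl_glue_univ:
  assumes S: "convergence_space S" and Z: "pseudotop Z" and g: "cmap (cyl S) Z g"
    and inv: "\<And>u v t. (u, v) \<in> E \<Longrightarrow> t \<in> {0..1} \<Longrightarrow> g (u, t) = g (v, t)"
  shows "\<exists>w. cmap (cyl (glue S E)) Z w \<and> (\<forall>s\<in>carrier S. \<forall>t\<in>{0..1}. w (gcls S E s, t) = g (s, t))"
  unfolding glue_final
proof (rule cyl_final_univ[OF S Z g])
  fix s s' and t :: real assume t: "t \<in> {0..1}" and e: "gcls S E s = gcls S E s'"
  show "g (s, t) = g (s', t)"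
    by (rule glue_rel_inv[OF gcls_eq_imp[OF e], where P = "\<lambda>x. g (x, t)"]) (rule inv[OF _ t])
qed

lemma glue_rep: "p \<in> carrier (glue S E) \<Longrightarrow> \<exists>s\<in>carrier S. p = gcls S E s"
  unfolding carrier_glue by blast

lemma sum_rep: "s \<in> carrier (sum_space A X) \<Longrightarrow> (\<exists>a\<in>carrier A. s = Inl a) \<or> (\<exists>x\<in>carrier X. s = Inr x)"
  unfolding carrier_sum by blast

lemma po_rel_D: "(u, v) \<in> po_rel B i f \<Longrightarrow> \<exists>b\<in>carrier B. u = Inl (i b) \<and> v = Inr (f b)"
  unfolding po_rel_def by blast

lemma pushout_part1:
  assumes c: "cof B A (i :: 'b \<Rightarrow> 'a)" and X: "pseudotop (X :: 'x cspace)" and f: "cmap B X f"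
  shows "is_pushout TYPE('z) B A X (pushout_space B A X i f) i f (po_inl B A X i f) (po_inr B A X i f)"
proof -
  have B: "pseudotop B" and A: "pseudotop A" and i: "cmap B A i" using cof_D[OF c] by auto
  let ?S = "sum_space A X" and ?E = "po_rel B i f"
  have csS: "convergence_space ?S" by (rule cs_sum[OF pt_cs[OF A] pt_cs[OF X]])
  have P: "pseudotop (pushout_space B A X i f)" unfolding pushout_space_def by (rule pt_glue[OF csS])
  have inl: "cmap A (pushout_space B A X i f) (po_inl B A X i f)"
    unfolding pushout_space_def po_inl_def by (rule cmap_comp'[OF cmap_Inl[OF pt_cs[OF A]] cmap_gcls[OF csS]])
  have inr: "cmap X (pushout_space B A X i f) (po_inr B A X i f)"
    unfolding pushout_space_def po_inr_def by (rule cmap_comp'[OF cmap_Inr[OF pt_cs[OF X]] cmap_gcls[OF csS]])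
  have comm: "\<forall>b\<in>carrier B. po_inl B A X i f (i b) = po_inr B A X i f (f b)"
    unfolding po_inl_def po_inr_def by (auto intro!: gcls_eq simp: po_rel_def)
  have univ: "(\<exists>w. cmap (pushout_space B A X i f) Z w \<and> (\<forall>a\<in>carrier A. w (po_inl B A X i f a) = g a) \<and>
          (\<forall>x\<in>carrier X. w (po_inr B A X i f x) = h x)) \<and>
        (\<forall>w w'. cmap (pushout_space B A X i f) Z w \<and> (\<forall>a\<in>carrier A. w (po_inl B A X i f a) = g a) \<and>
          (\<forall>x\<in>carrier X. w (po_inr B A X i f x) = h x) \<and>
          cmap (pushout_space B A X i f) Z w' \<and> (\<forall>a\<in>carrier A. w' (po_inl B A X i f a) = g a) \<and>
          (\<forall>x\<in>carrier X. w' (po_inr B A X i f x) = h x) \<longrightarrow>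
          (\<forall>p\<in>carrier (pushout_space B A X i f). w p = w' p))"
    if Z: "pseudotop (Z :: 'z cspace)" and g: "cmap A Z g" and h: "cmap X Z h"
      and gh: "\<forall>b\<in>carrier B. g (i b) = h (f b)" for Z g h
  proof
    have k: "cmap ?S Z (case_sum g h)" by (rule cmap_case_sum[OF pt_cs[OF Z] g h])
    have inv: "case_sum g h u = case_sum g h v" if "(u, v) \<in> ?E" for u v
      using po_rel_D[OF that] gh by auto
    obtain w where w: "cmap (glue ?S ?E) Z w" "\<forall>s\<in>carrier ?S. w (gcls ?S ?E s) = case_sum g h s"
      using glue_univ[OF csS Z k inv] by blast
    show "\<exists>w. cmap (pushout_space B A X i f) Z w \<and> (\<forall>a\<in>carrier A. w (po_inl B A X i f a) = g a) \<and>
          (\<forall>x\<in>carrier X. w (po_inr B A X i f x) = h x)"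
    proof (intro exI[of _ w] conjI ballI)
      show "cmap (pushout_space B A X i f) Z w" using w(1) unfolding pushout_space_def .
      fix a assume "a \<in> carrier A"
      then have "Inl a \<in> carrier ?S" by simp
      from w(2)[rule_format, OF this] show "w (po_inl B A X i f a) = g a" unfolding po_inl_def by simp
    next
      fix x assume "x \<in> carrier X"
      then have "Inr x \<in> carrier ?S" by simp
      from w(2)[rule_format, OF this] show "w (po_inr B A X i f x) = h x" unfolding po_inr_def by simp
    qed
  next
    show "\<forall>w w'. cmap (pushout_space B A X i f) Z w \<and> (\<forall>a\<in>carrier A. w (po_inl B A X i f a) = g a) \<and>
          (\<forall>x\<in>carrier X. w (po_inr B A X i f x) = h x) \<and>
          cmap (pushout_space B A X i f) Z w' \<and> (\<forall>a\<in>carrier A. w' (po_inl B A X i f a) = g a) \<and>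
          (\<forall>x\<in>carrier X. w' (po_inr B A X i f x) = h x) \<longrightarrow>
          (\<forall>p\<in>carrier (pushout_space B A X i f). w p = w' p)"
    proof (intro allI impI ballI)
      fix w w' p
      assume a: "cmap (pushout_space B A X i f) Z w \<and> (\<forall>a\<in>carrier A. w (po_inl B A X i f a) = g a) \<and>
          (\<forall>x\<in>carrier X. w (po_inr B A X i f x) = h x) \<and>
          cmap (pushout_space B A X i f) Z w' \<and> (\<forall>a\<in>carrier A. w' (po_inl B A X i f a) = g a) \<and>
          (\<forall>x\<in>carrier X. w' (po_inr B A X i f x) = h x)"
        and p: "p \<in> carrier (pushout_space B A X i f)"
      obtain s where s: "s \<in> carrier ?S" "p = gcls ?S ?E s" using glue_rep p unfolding pushout_space_def by blast
      from sum_rep[OF s(1)] show "w p = w' p"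
      proof
        assume "\<exists>a\<in>carrier A. s = Inl a"
        then obtain a where "a \<in> carrier A" "s = Inl a" by blast
        then show ?thesis using a s(2) unfolding po_inl_def by auto
      next
        assume "\<exists>x\<in>carrier X. s = Inr x"
        then obtain x where "x \<in> carrier X" "s = Inr x" by blast
        then show ?thesis using a s(2) unfolding po_inr_def by auto
      qed
    qed
  qed
  have univ': "\<forall>(Z :: 'z cspace) g h. pseudotop Z \<and> cmap A Z g \<and> cmap X Z h \<and> (\<forall>b\<in>carrier B. g (i b) = h (f b)) \<longrightarrow>
        (\<exists>w. cmap (pushout_space B A X i f) Z w \<and> (\<forall>a\<in>carrier A. w (po_inl B A X i f a) = g a) \<and>
          (\<forall>x\<in>carrier X. w (po_inr B A X i f x) = h x)) \<and>
        (\<forall>w w'. cmap (pushout_space B A X i f) Z w \<and> (\<forall>a\<in>carrier A. w (po_inl B A X i f a) = g a) \<and>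
          (\<forall>x\<in>carrier X. w (po_inr B A X i f x) = h x) \<and>
          cmap (pushout_space B A X i f) Z w' \<and> (\<forall>a\<in>carrier A. w' (po_inl B A X i f a) = g a) \<and>
          (\<forall>x\<in>carrier X. w' (po_inr B A X i f x) = h x) \<longrightarrow>
          (\<forall>p\<in>carrier (pushout_space B A X i f). w p = w' p))"
    apply (intro allI impI)
    apply (elim conjE)
    apply (rule univ)
       apply assumption+
    done
  show ?thesis unfolding is_pushout_def
    by (rule conjI[OF P conjI[OF inl conjI[OF inr conjI[OF comm univ']]]])
qed

lemma cyl_po_ext:
  assumes c: "cof B A (i :: 'b \<Rightarrow> 'a)" and X: "pseudotop (X :: 'x cspace)" and f: "cmap B X f"
    and Z: "pseudotop Z" and g: "cmap (cyl A) Z g" and h: "cmap (cyl X) Z h"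
    and gh: "\<And>b t. b \<in> carrier B \<Longrightarrow> t \<in> {0..1} \<Longrightarrow> g (i b, t) = h (f b, t)"
  shows "\<exists>w. cmap (cyl (pushout_space B A X i f)) Z w \<and>
     (\<forall>a\<in>carrier A. \<forall>t\<in>{0..1}. w (po_inl B A X i f a, t) = g (a, t)) \<and>
     (\<forall>x\<in>carrier X. \<forall>t\<in>{0..1}. w (po_inr B A X i f x, t) = h (x, t))"
proof -
  have B: "pseudotop B" and A: "pseudotop A" and i: "cmap B A i" using cof_D[OF c] by auto
  let ?S = "sum_space A X" and ?E = "po_rel B i f"
  have csS: "convergence_space ?S" by (rule cs_sum[OF pt_cs[OF A] pt_cs[OF X]])
  let ?k = "\<lambda>z. case fst z of Inl a \<Rightarrow> g (a, snd z) | Inr x \<Rightarrow> h (x, snd z)"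
  have k: "cmap (cyl ?S) Z ?k" by (rule cyl_sum_univ[OF pt_cs[OF A] pt_cs[OF X] pt_cs[OF Z] g h])
  have inv: "?k (u, t) = ?k (v, t)" if "(u, v) \<in> ?E" "t \<in> {0..1}" for u v t
    using po_rel_D[OF that(1)] gh that(2) by auto
  obtain w where w: "cmap (cyl (glue ?S ?E)) Z w" "\<forall>s\<in>carrier ?S. \<forall>t\<in>{0..1}. w (gcls ?S ?E s, t) = ?k (s, t)"
    using cyl_glue_univ[OF csS Z k inv] by blast
  show ?thesis
  proof (intro exI[of _ w] conjI ballI)
    show "cmap (cyl (pushout_space B A X i f)) Z w" using w(1) unfolding pushout_space_def .
    fix a t assume "a \<in> carrier A" "t \<in> {0..1::real}"
    moreover from this have "Inl a \<in> carrier ?S" by simp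
    ultimately show "w (po_inl B A X i f a, t) = g (a, t)"
      using w(2)[rule_format, of "Inl a" t] unfolding po_inl_def by simp
  next
    fix x t assume "x \<in> carrier X" "t \<in> {0..1::real}"
    moreover from this have "Inr x \<in> carrier ?S" by simp
    ultimately show "w (po_inr B A X i f x, t) = h (x, t)"
      using w(2)[rule_format, of "Inr x" t] unfolding po_inr_def by simp
  qed
qed

lemma cyl_po_rep:
  assumes "p \<in> carrier (cyl (pushout_space B A X i f))"
  shows "(\<exists>a\<in>carrier A. \<exists>t\<in>{0..1}. p = (po_inl B A X i f a, t)) \<or> (\<exists>x\<in>carrier X. \<exists>t\<in>{0..1}. p = (po_inr B A X i f x, t))"
proof -
  obtain c t where ct: "p = (c, t)" "c \<in> carrier (pushout_space B A X i f)" "t \<in> {0..1}" using assms by auto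
  then obtain s where s: "s \<in> carrier (sum_space A X)" "c = gcls (sum_space A X) (po_rel B i f) s"
    using glue_rep unfolding pushout_space_def by blast
  from sum_rep[OF s(1)] show ?thesis
  proof
    assume "\<exists>a\<in>carrier A. s = Inl a"
    then show ?thesis using ct s unfolding po_inl_def by blast
  next
    assume "\<exists>x\<in>carrier X. s = Inr x"
    then show ?thesis using ct s unfolding po_inr_def by blast
  qed
qed

lemma pushout_part3:
  assumes c: "cof B A (i :: 'b \<Rightarrow> 'a)" and X: "pseudotop (X :: 'x cspace)" and f: "cmap B X f"
  shows "is_pushout TYPE('z) (cyl B) (cyl A) (cyl X) (cyl (pushout_space B A X i f))
        (Imap i) (Imap f) (Imap (po_inl B A X i f)) (Imap (po_inr B A X i f))"
proof -
  have B: "pseudotop B" and A: "pseudotop A" and i: "cmap B A i" using cof_D[OF c] by auto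
  let ?P = "pushout_space B A X i f"
  have csS: "convergence_space (sum_space A X)" by (rule cs_sum[OF pt_cs[OF A] pt_cs[OF X]])
  have P: "pseudotop (cyl ?P)" unfolding pushout_space_def by (rule pt_cyl[OF pt_glue[OF csS]])
  have inl: "cmap A ?P (po_inl B A X i f)"
    unfolding pushout_space_def po_inl_def by (rule cmap_comp'[OF cmap_Inl[OF pt_cs[OF A]] cmap_gcls[OF csS]])
  have inr: "cmap X ?P (po_inr B A X i f)"
    unfolding pushout_space_def po_inr_def by (rule cmap_comp'[OF cmap_Inr[OF pt_cs[OF X]] cmap_gcls[OF csS]])
  have comm: "\<forall>z\<in>carrier (cyl B). Imap (po_inl B A X i f) (Imap i z) = Imap (po_inr B A X i f) (Imap f z)"
    unfolding po_inl_def po_inr_def Imap_def by (auto intro!: gcls_eq simp: po_rel_def)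
  have univ: "(\<exists>w. cmap (cyl ?P) Z w \<and> (\<forall>a\<in>carrier (cyl A). w (Imap (po_inl B A X i f) a) = g a) \<and>
          (\<forall>x\<in>carrier (cyl X). w (Imap (po_inr B A X i f) x) = h x)) \<and>
        (\<forall>w w'. cmap (cyl ?P) Z w \<and> (\<forall>a\<in>carrier (cyl A). w (Imap (po_inl B A X i f) a) = g a) \<and>
          (\<forall>x\<in>carrier (cyl X). w (Imap (po_inr B A X i f) x) = h x) \<and>
          cmap (cyl ?P) Z w' \<and> (\<forall>a\<in>carrier (cyl A). w' (Imap (po_inl B A X i f) a) = g a) \<and>
          (\<forall>x\<in>carrier (cyl X). w' (Imap (po_inr B A X i f) x) = h x) \<longrightarrow>
          (\<forall>p\<in>carrier (cyl ?P). w p = w' p))"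
    if Z: "pseudotop (Z :: 'z cspace)" and g: "cmap (cyl A) Z g" and h: "cmap (cyl X) Z h"
      and gh: "\<forall>b\<in>carrier (cyl B). g (Imap i b) = h (Imap f b)" for Z g h
  proof
    have gh': "g (i b, t) = h (f b, t)" if "b \<in> carrier B" "t \<in> {0..1}" for b t
      using gh that by (auto simp: Imap_def)
    obtain w where w: "cmap (cyl ?P) Z w" "\<forall>a\<in>carrier A. \<forall>t\<in>{0..1}. w (po_inl B A X i f a, t) = g (a, t)"
      "\<forall>x\<in>carrier X. \<forall>t\<in>{0..1}. w (po_inr B A X i f x, t) = h (x, t)"
      using cyl_po_ext[OF c X f Z g h gh'] by blast
    show "\<exists>w. cmap (cyl ?P) Z w \<and> (\<forall>a\<in>carrier (cyl A). w (Imap (po_inl B A X i f) a) = g a) \<and>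
          (\<forall>x\<in>carrier (cyl X). w (Imap (po_inr B A X i f) x) = h x)"
      using w by (intro exI[of _ w]) (auto simp: Imap_def)
  next
    show "\<forall>w w'. cmap (cyl ?P) Z w \<and> (\<forall>a\<in>carrier (cyl A). w (Imap (po_inl B A X i f) a) = g a) \<and>
          (\<forall>x\<in>carrier (cyl X). w (Imap (po_inr B A X i f) x) = h x) \<and>
          cmap (cyl ?P) Z w' \<and> (\<forall>a\<in>carrier (cyl A). w' (Imap (po_inl B A X i f) a) = g a) \<and>
          (\<forall>x\<in>carrier (cyl X). w' (Imap (po_inr B A X i f) x) = h x) \<longrightarrow>
          (\<forall>p\<in>carrier (cyl ?P). w p = w' p)"
    proof (intro allI impI ballI)
      fix w w' p
      assume a: "cmap (cyl ?P) Z w \<and> (\<forall>a\<in>carrier (cyl A). w (Imap (po_inl B A X i f) a) = g a) \<and>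
          (\<forall>x\<in>carrier (cyl X). w (Imap (po_inr B A X i f) x) = h x) \<and>
          cmap (cyl ?P) Z w' \<and> (\<forall>a\<in>carrier (cyl A). w' (Imap (po_inl B A X i f) a) = g a) \<and>
          (\<forall>x\<in>carrier (cyl X). w' (Imap (po_inr B A X i f) x) = h x)"
        and p: "p \<in> carrier (cyl ?P)"
      from cyl_po_rep[OF p] show "w p = w' p"
      proof
        assume "\<exists>a\<in>carrier A. \<exists>t\<in>{0..1}. p = (po_inl B A X i f a, t)"
        then obtain a t where at: "a \<in> carrier A" "t \<in> {0..1}" "p = (po_inl B A X i f a, t)" by blast
        then have "(a, t) \<in> carrier (cyl A)" by simp
        then show ?thesis using a at by (auto simp: Imap_def)
      next
        assume "\<exists>x\<in>carrier X. \<exists>t\<in>{0..1}. p = (po_inr B A X i f x, t)"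
        then obtain x t where xt: "x \<in> carrier X" "t \<in> {0..1}" "p = (po_inr B A X i f x, t)" by blast
        then have "(x, t) \<in> carrier (cyl X)" by simp
        then show ?thesis using a xt by (auto simp: Imap_def)
      qed
    qed
  qed
  have univ': "\<forall>(Z :: 'z cspace) g h. pseudotop Z \<and> cmap (cyl A) Z g \<and> cmap (cyl X) Z h \<and> (\<forall>b\<in>carrier (cyl B). g (Imap i b) = h (Imap f b)) \<longrightarrow>
        (\<exists>w. cmap (cyl ?P) Z w \<and> (\<forall>a\<in>carrier (cyl A). w (Imap (po_inl B A X i f) a) = g a) \<and>
          (\<forall>x\<in>carrier (cyl X). w (Imap (po_inr B A X i f) x) = h x)) \<and>
        (\<forall>w w'. cmap (cyl ?P) Z w \<and> (\<forall>a\<in>carrier (cyl A). w (Imap (po_inl B A X i f) a) = g a) \<and>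
          (\<forall>x\<in>carrier (cyl X). w (Imap (po_inr B A X i f) x) = h x) \<and>
          cmap (cyl ?P) Z w' \<and> (\<forall>a\<in>carrier (cyl A). w' (Imap (po_inl B A X i f) a) = g a) \<and>
          (\<forall>x\<in>carrier (cyl X). w' (Imap (po_inr B A X i f) x) = h x) \<longrightarrow>
          (\<forall>p\<in>carrier (cyl ?P). w p = w' p))"
    apply (intro allI impI)
    apply (elim conjE)
    apply (rule univ)
       apply assumption+
    done
  show ?thesis unfolding is_pushout_def
    by (rule conjI[OF P conjI[OF cmap_Imap[OF inl] conjI[OF cmap_Imap[OF inr] conjI[OF comm univ']]]])
qed

lemma pushout_part2:
  assumes c: "cof B A (i :: 'b \<Rightarrow> 'a)" and X: "pseudotop (X :: 'x cspace)" and f: "cmap B X f"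
  shows "cof X (pushout_space B A X i f) (po_inr B A X i f)"
proof -
  have B: "pseudotop B" and A: "pseudotop A" and i: "cmap B A i" using cof_D[OF c] by auto
  let ?P = "pushout_space B A X i f"
  have csS: "convergence_space (sum_space A X)" by (rule cs_sum[OF pt_cs[OF A] pt_cs[OF X]])
  have P: "pseudotop ?P" unfolding pushout_space_def by (rule pt_glue[OF csS])
  have inr: "cmap X ?P (po_inr B A X i f)"
    unfolding pushout_space_def po_inr_def by (rule cmap_comp'[OF cmap_Inr[OF pt_cs[OF X]] cmap_gcls[OF csS]])
  have inl: "cmap A ?P (po_inl B A X i f)"
    unfolding pushout_space_def po_inl_def by (rule cmap_comp'[OF cmap_Inl[OF pt_cs[OF A]] cmap_gcls[OF csS]])
  have comm: "\<And>b. b \<in> carrier B \<Longrightarrow> po_inl B A X i f (i b) = po_inr B A X i f (f b)"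
    unfolding po_inl_def po_inr_def by (auto intro!: gcls_eq simp: po_rel_def)
  have "hep TYPE('y) X ?P (po_inr B A X i f)" for dummy :: 'y
    unfolding hep_def
  proof (intro ballI allI impI)
    fix k :: real and Y :: "'y cspace" and f' G
    assume k: "k \<in> {0, 1}" and a: "pseudotop Y \<and> cmap ?P Y f' \<and> cmap (cyl X) Y G \<and>
      (\<forall>b\<in>carrier X. f' (po_inr B A X i f b) = G (incl k b))"
    have Y: "pseudotop Y" and f': "cmap ?P Y f'" and G: "cmap (cyl X) Y G"
      and cp: "\<And>x. x \<in> carrier X \<Longrightarrow> f' (po_inr B A X i f x) = G (x, k)" using a by (auto simp: incl_def)
    have hg: "hep TYPE('y) B A i" by (rule hep_general[OF c])
    have f1: "cmap A Y (\<lambda>a. f' (po_inl B A X i f a))" by (rule cmap_comp'[OF inl f'])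
    have G1: "cmap (cyl B) Y (\<lambda>z. G (Imap f z))" by (rule cmap_comp'[OF cmap_Imap[OF f] G])
    have cp1: "\<forall>b\<in>carrier B. f' (po_inl B A X i f (i b)) = G (Imap f (incl k b))"
    proof
      fix b assume b: "b \<in> carrier B"
      have "f b \<in> carrier X" using cmapD1[OF f b] .
      then show "f' (po_inl B A X i f (i b)) = G (Imap f (incl k b))"
        using comm[OF b] cp by (simp add: Imap_def incl_def)
    qed
    obtain H1 where H1: "cmap (cyl A) Y H1" "\<forall>a\<in>carrier A. H1 (incl k a) = f' (po_inl B A X i f a)"
      "\<forall>z\<in>carrier (cyl B). H1 (Imap i z) = G (Imap f z)"
      using hg k Y f1 G1 cp1 unfolding hep_def by blast
    have gh: "H1 (i b, t) = G (f b, t)" if "b \<in> carrier B" "t \<in> {0..1}" for b t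
      using H1(3) that by (auto simp: Imap_def)
    obtain w where w: "cmap (cyl ?P) Y w" "\<forall>a\<in>carrier A. \<forall>t\<in>{0..1}. w (po_inl B A X i f a, t) = H1 (a, t)"
      "\<forall>x\<in>carrier X. \<forall>t\<in>{0..1}. w (po_inr B A X i f x, t) = G (x, t)"
      using cyl_po_ext[OF c X f Y H1(1) G gh] by blast
    have k01: "k \<in> {0..1}" using k by auto
    show "\<exists>H. cmap (cyl ?P) Y H \<and> (\<forall>a\<in>carrier ?P. H (incl k a) = f' a) \<and>
         (\<forall>z\<in>carrier (cyl X). H (Imap (po_inr B A X i f) z) = G z)"
    proof (intro exI[of _ w] conjI ballI)
      show "cmap (cyl ?P) Y w" by (rule w(1))
      fix p assume p: "p \<in> carrier ?P"
      then have "(p, k) \<in> carrier (cyl ?P)" using k01 by simp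
      from cyl_po_rep[OF this] show "w (incl k p) = f' p"
      proof
        assume "\<exists>a\<in>carrier A. \<exists>t\<in>{0..1}. (p, k) = (po_inl B A X i f a, t)"
        then obtain a where a: "a \<in> carrier A" "p = po_inl B A X i f a" by blast
        then show ?thesis using w(2) H1(2) k01 by (simp add: incl_def)
      next
        assume "\<exists>x\<in>carrier X. \<exists>t\<in>{0..1}. (p, k) = (po_inr B A X i f x, t)"
        then obtain x where x: "x \<in> carrier X" "p = po_inr B A X i f x" by blast
        then show ?thesis using w(3) cp k01 by (simp add: incl_def)
      qed
    next
      fix z assume "z \<in> carrier (cyl X)"
      then obtain x t where "z = (x, t)" "x \<in> carrier X" "t \<in> {0..1}" by auto
      then show "w (Imap (po_inr B A X i f) z) = G z" using w(3) by (simp add: Imap_def)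
    qed
  qed
  then show ?thesis unfolding cof_def using X P inr by blast
qed

lemma carrier_empty[simp]: "carrier empty_space = {}"
  unfolding empty_space_def by simp

lemma conv_empty[simp]: "conv empty_space F x = False"
  unfolding empty_space_def by simp

lemma pt_empty: "pseudotop empty_space"
  unfolding pseudotop_def convergence_space_def pfilter_def by simp

lemma cmap_empty: "cmap empty_space X f"
  unfolding cmap_def by simp

lemma cyl_empty: "cyl empty_space = empty_space"
proof -
  have "conv (cyl (empty_space :: 'a cspace)) = (\<lambda>F z. False)"
    by (auto simp: fun_eq_iff conv_cyl pfilter_def)
  then show ?thesis unfolding cyl_def empty_space_def by (auto simp: fun_eq_iff pfilter_def)
qed

lemma iso_cof:
  assumes B: "pseudotop B" and A: "pseudotop A" and iso: "ps_iso B A (i :: 'b \<Rightarrow> 'a)"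
  shows "hep TYPE('y) B A i"
  unfolding hep_def
proof (intro ballI allI impI)
  obtain g where g: "cmap A B g" "\<forall>x\<in>carrier B. g (i x) = x" "\<forall>y\<in>carrier A. i (g y) = y"
    using iso unfolding ps_iso_def by blast
  fix k :: real and Y :: "'y cspace" and f G
  assume k: "k \<in> {0, 1}" and a: "pseudotop Y \<and> cmap A Y f \<and> cmap (cyl B) Y G \<and> (\<forall>b\<in>carrier B. f (i b) = G (incl k b))"
  show "\<exists>H. cmap (cyl A) Y H \<and> (\<forall>a\<in>carrier A. H (incl k a) = f a) \<and> (\<forall>z\<in>carrier (cyl B). H (Imap i z) = G z)"
  proof (intro exI[of _ "\<lambda>z. G (Imap g z)"] conjI ballI)
    show "cmap (cyl A) Y (\<lambda>z. G (Imap g z))" using cmap_comp'[OF cmap_Imap[OF g(1)]] a by blast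
    fix x assume x: "x \<in> carrier A"
    have "g x \<in> carrier B" using cmapD1[OF g(1) x] .
    then have "f (i (g x)) = G (incl k (g x))" using a by blast
    then show "G (Imap g (incl k x)) = f x" using g(3) x by (simp add: incl_def Imap_def)
  next
    fix z assume "z \<in> carrier (cyl B)"
    then show "G (Imap g (Imap i z)) = G z" using g(2) by (auto simp: Imap_def)
  qed
qed

lemma empty_hep: "pseudotop X \<Longrightarrow> hep TYPE('y) (empty_space :: 'b cspace) X f"
  unfolding hep_def
proof (intro ballI allI impI)
  fix k :: real and Y :: "'y cspace" and f' G
  assume "pseudotop Y \<and> cmap X Y f' \<and> cmap (cyl empty_space) Y G \<and> (\<forall>b\<in>carrier (empty_space :: 'b cspace). f' (f b) = G (incl k b))"
  then have f': "cmap X Y f'" by blast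
  show "\<exists>H. cmap (cyl X) Y H \<and> (\<forall>a\<in>carrier X. H (incl k a) = f' a) \<and> (\<forall>z\<in>carrier (cyl (empty_space :: 'b cspace)). H (Imap f z) = G z)"
  proof (intro exI[of _ "\<lambda>z. f' (proj z)"] conjI ballI)
    show "cmap (cyl X) Y (\<lambda>z. f' (proj z))" by (rule cmap_comp'[OF cmap_proj f'])
  qed (auto simp: incl_def proj_def)
qed

lemma comp_hep:
  assumes c1: "cof C B (i :: 'c \<Rightarrow> 'b)" and c2: "cof B A (i' :: 'b \<Rightarrow> 'a)"
  shows "hep TYPE('y) C A (i' \<circ> i)"
  unfolding hep_def
proof (intro ballI allI impI)
  have h1: "hep TYPE('y) C B i" by (rule hep_general[OF c1])
  have h2: "hep TYPE('y) B A i'" by (rule hep_general[OF c2])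
  have i: "cmap C B i" using cof_D[OF c1] by auto
  have i': "cmap B A i'" using cof_D[OF c2] by auto
  fix k :: real and Y :: "'y cspace" and f G
  assume k: "k \<in> {0, 1}" and a: "pseudotop Y \<and> cmap A Y f \<and> cmap (cyl C) Y G \<and> (\<forall>b\<in>carrier C. f ((i' \<circ> i) b) = G (incl k b))"
  have Y: "pseudotop Y" and f: "cmap A Y f" and G: "cmap (cyl C) Y G" using a by auto
  have f1: "cmap B Y (\<lambda>b. f (i' b))" by (rule cmap_comp'[OF i' f])
  have cpC: "\<forall>b\<in>carrier C. f (i' (i b)) = G (incl k b)" using a by simp
  have "pseudotop Y \<and> cmap B Y (\<lambda>b. f (i' b)) \<and> cmap (cyl C) Y G \<and> (\<forall>b\<in>carrier C. f (i' (i b)) = G (incl k b))"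
    using Y f1 G cpC by blast
  then obtain H1 where H1: "cmap (cyl B) Y H1" "\<forall>b\<in>carrier B. H1 (incl k b) = f (i' b)" "\<forall>z\<in>carrier (cyl C). H1 (Imap i z) = G z"
    using h1 k unfolding hep_def by blast
  have cp: "\<forall>b\<in>carrier B. f (i' b) = H1 (incl k b)" using H1(2) by simp
  obtain H2 where H2: "cmap (cyl A) Y H2" "\<forall>a\<in>carrier A. H2 (incl k a) = f a" "\<forall>z\<in>carrier (cyl B). H2 (Imap i' z) = H1 z"
    using h2 k Y f H1(1) cp unfolding hep_def by blast
  show "\<exists>H. cmap (cyl A) Y H \<and> (\<forall>a\<in>carrier A. H (incl k a) = f a) \<and> (\<forall>z\<in>carrier (cyl C). H (Imap (i' \<circ> i) z) = G z)"
  proof (intro exI[of _ H2] conjI ballI)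
    show "cmap (cyl A) Y H2" by (rule H2(1))
    show "\<And>a. a \<in> carrier A \<Longrightarrow> H2 (incl k a) = f a" using H2(2) by blast
    fix z assume z: "z \<in> carrier (cyl C)"
    have "Imap i z \<in> carrier (cyl B)" using cmapD1[OF cmap_Imap[OF i]] z by blast
    then have "H2 (Imap i' (Imap i z)) = H1 (Imap i z)" using H2(3) by blast
    moreover have "Imap (i' \<circ> i) z = Imap i' (Imap i z)" by (simp add: Imap_def)
    moreover have "H1 (Imap i z) = G z" using H1(3) z by blast
    ultimately show "H2 (Imap (i' \<circ> i) z) = G z" by simp
  qed
qed

lemma swap_cmap:
  assumes "convergence_space X"
  shows "cmap (cyl (cyl X)) (cyl (cyl X)) (\<lambda>z. ((fst (fst z), snd z), snd (fst z)))"
proof -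
  have "cmap (cyl (cyl X)) (cyl (cyl X)) (\<lambda>z. ((fst (fst z), snd (snd (fst z), snd z)), fst (snd (fst z), snd z)))"
    by (rule cmap_reparam2[OF assms]) (auto intro: continuous_on_snd continuous_on_fst continuous_on_id)
  then show ?thesis by simp
qed

definition phi1 :: "real \<times> real \<Rightarrow> real" where
  "phi1 p = max (max (1 - snd p) (1 + fst p - 3 * snd p / 2)) (6 * fst p + snd p - 4) / 3"
definition phi2 :: "real \<times> real \<Rightarrow> real" where
  "phi2 p = min (min (snd p) (2 * fst p)) (2 - 2 * fst p)"
definition ppp :: "real \<times> real \<Rightarrow> real" where
  "ppp p = max 0 (min (3 * fst p) (3 * (1 - snd p)))"
definition psi1 :: "real \<times> real \<Rightarrow> real" where
  "psi1 p = snd p / 2 + min (max (ppp p - (1 - snd p)) 0) (1 - snd p)"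
definition psi2 :: "real \<times> real \<Rightarrow> real" where
  "psi2 p = max (1 - ppp p) (snd p + max 0 (ppp p - 2 * (1 - snd p)))"
definition tau :: "real \<Rightarrow> real \<Rightarrow> real" where
  "tau k x = k + (1 - 2 * k) * x"
definition clamp :: "real \<Rightarrow> real" where
  "clamp x = min 1 (max 0 x)"

lemma R1: "0 \<le> s \<Longrightarrow> s \<le> 1 \<Longrightarrow> 0 \<le> t \<Longrightarrow> t \<le> 1 \<Longrightarrow> 0 \<le> phi1 (s, t) \<and> phi1 (s, t) \<le> 1 \<and> 0 \<le> phi2 (s, t) \<and> phi2 (s, t) \<le> 1"
  unfolding phi1_def phi2_def by (simp add: min_def max_def)

lemma R2: "0 \<le> s \<Longrightarrow> s \<le> 1 \<Longrightarrow> 0 \<le> t \<Longrightarrow> t \<le> 1 \<Longrightarrow> psi1 (phi1 (s, t), phi2 (s, t)) = s \<and> psi2 (phi1 (s, t), phi2 (s, t)) = t"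
  unfolding phi1_def phi2_def psi1_def psi2_def ppp_def by (simp add: min_def max_def; simp add: field_simps)

lemma R3: "0 \<le> u \<Longrightarrow> u \<le> 1 \<Longrightarrow> 0 \<le> v \<Longrightarrow> v \<le> 1 \<Longrightarrow> 0 \<le> psi1 (u, v) \<and> psi1 (u, v) \<le> 1 \<and> 0 \<le> psi2 (u, v) \<and> psi2 (u, v) \<le> 1"
  unfolding psi1_def psi2_def ppp_def by (simp add: min_def max_def)

lemma R4a: "0 \<le> u \<Longrightarrow> u \<le> 1/3 \<Longrightarrow> psi1 (u, 0) = 0 \<and> psi2 (u, 0) = 1 - 3 * u"
  unfolding psi1_def psi2_def ppp_def by (simp add: min_def max_def)

lemma R4b: "1/3 \<le> u \<Longrightarrow> u \<le> 2/3 \<Longrightarrow> psi1 (u, 0) = 3 * u - 1 \<and> psi2 (u, 0) = 0"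
  unfolding psi1_def psi2_def ppp_def by (simp add: min_def max_def)

lemma R4c: "2/3 \<le> u \<Longrightarrow> u \<le> 1 \<Longrightarrow> psi1 (u, 0) = 1 \<and> psi2 (u, 0) = 3 * u - 2"
  unfolding psi1_def psi2_def ppp_def by (simp add: min_def max_def)

lemma R5a: "0 \<le> s \<Longrightarrow> s \<le> 1 \<Longrightarrow> phi1 (s, 0) = (1 + s) / 3 \<and> phi2 (s, 0) = 0"
  unfolding phi1_def phi2_def by (simp add: min_def max_def)

lemma R5b: "0 \<le> t \<Longrightarrow> t \<le> 1 \<Longrightarrow> phi1 (0, t) = (1 - t) / 3 \<and> phi2 (0, t) = 0"
  unfolding phi1_def phi2_def by (simp add: min_def max_def)

lemma R5c: "0 \<le> t \<Longrightarrow> t \<le> 1 \<Longrightarrow> phi1 (1, t) = (2 + t) / 3 \<and> phi2 (1, t) = 0"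
  unfolding phi1_def phi2_def by (simp add: min_def max_def)

lemma T1: "k \<in> {0, 1} \<Longrightarrow> tau k (tau k x) = x"
  unfolding tau_def by (auto simp: algebra_simps)

lemma T2: "k \<in> {0, 1} \<Longrightarrow> tau k 0 = k"
  unfolding tau_def by auto

lemma T3: "k \<in> {0, 1} \<Longrightarrow> tau k k = 0"
  unfolding tau_def by auto

lemma T4: "k \<in> {0, 1} \<Longrightarrow> 0 \<le> x \<Longrightarrow> x \<le> 1 \<Longrightarrow> 0 \<le> tau k x \<and> tau k x \<le> 1"
  unfolding tau_def by auto

lemma T5: "k \<in> {0, 1} \<Longrightarrow> tau k x = 0 \<Longrightarrow> x = k"
  unfolding tau_def by auto

lemma C1: "0 \<le> x \<Longrightarrow> x \<le> 1 \<Longrightarrow> clamp x = x"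
  unfolding clamp_def by simp

lemma C2: "0 \<le> clamp x \<and> clamp x \<le> 1"
  unfolding clamp_def by simp

lemma cont_phi1: "continuous_on UNIV phi1"
  unfolding phi1_def[abs_def] by (intro continuous_intros) auto
lemma cont_phi2: "continuous_on UNIV phi2"
  unfolding phi2_def[abs_def] by (intro continuous_intros)
lemma cont_ppp: "continuous_on UNIV ppp"
  unfolding ppp_def[abs_def] by (intro continuous_intros)
lemma cont_psi1: "continuous_on UNIV psi1"
  unfolding psi1_def[abs_def] by (intro continuous_intros cont_ppp) auto
lemma cont_psi2: "continuous_on UNIV psi2"
  unfolding psi2_def[abs_def] by (intro continuous_intros cont_ppp)
lemma cont_tau: "continuous_on UNIV (tau k)"
  unfolding tau_def[abs_def] by (intro continuous_intros)
lemma cont_clamp: "continuous_on UNIV clamp"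
  unfolding clamp_def[abs_def] by (intro continuous_intros)

lemma dcyl_raw_eq: "dcyl_raw i = case_sum (incl 0) (case_sum (Imap i) (incl 1))"
  by (rule ext) (simp add: dcyl_raw_def split: sum.split)

lemma dcyl_raw_inv: "(u, v) \<in> dcyl_rel B i \<Longrightarrow> dcyl_raw i u = dcyl_raw i v"
  unfolding dcyl_rel_def by (auto simp: dcyl_raw_def incl_def Imap_def)

lemma dcyl_map_cls:
  "dcyl_map i (gcls (sum_space A (sum_space (cyl B) A)) (dcyl_rel B i) s) = dcyl_raw i s"
proof -
  let ?c = "gcls (sum_space A (sum_space (cyl B) A)) (dcyl_rel B i) s"
  have "s \<in> ?c" unfolding gcls_def glue_rel_def by simp
  then have "(SOME s'. s' \<in> ?c) \<in> ?c" by (rule someI)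
  then have "(s, SOME s'. s' \<in> ?c) \<in> glue_rel (sum_space A (sum_space (cyl B) A)) (dcyl_rel B i)"
    unfolding gcls_def by simp
  then have "dcyl_raw i s = dcyl_raw i (SOME s'. s' \<in> ?c)"
    by (rule glue_rel_inv) (rule dcyl_raw_inv)
  then show ?thesis unfolding dcyl_map_def by simp
qed

lemma dcyl_basic:
  assumes c: "cof B A (i :: 'b \<Rightarrow> 'a)"
  shows "pseudotop (dcyl B A i) \<and> cmap (dcyl B A i) (cyl A) (dcyl_map i)"
proof -
  have B: "pseudotop B" and A: "pseudotop A" and i: "cmap B A i" using cof_D[OF c] by auto
  let ?S = "sum_space A (sum_space (cyl B) A)" and ?E = "dcyl_rel B i"
  have csA: "convergence_space A" by (rule pt_cs[OF A])
  have csB: "convergence_space (cyl B)" by (rule cs_cyl[OF pt_cs[OF B]])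
  have csS: "convergence_space ?S" by (rule cs_sum[OF csA cs_sum[OF csB csA]])
  have ptD: "pseudotop (dcyl B A i)" unfolding dcyl_def by (rule pt_glue[OF csS])
  have cA: "pseudotop (cyl A)" by (rule pt_cyl[OF A])
  have i0: "cmap A (cyl A) (incl 0)" by (rule cmap_incl[OF csA]) simp
  have i1: "cmap A (cyl A) (incl 1)" by (rule cmap_incl[OF csA]) simp
  have raw: "cmap ?S (cyl A) (dcyl_raw i)"
    unfolding dcyl_raw_eq
    by (rule cmap_case_sum[OF pt_cs[OF cA] i0 cmap_case_sum[OF pt_cs[OF cA] cmap_Imap[OF i] i1]])
  have ex: "\<exists>w. cmap (glue ?S ?E) (cyl A) w \<and> (\<forall>s\<in>carrier ?S. w (gcls ?S ?E s) = dcyl_raw i s)"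
    by (rule glue_univ[OF csS cA raw]) (rule dcyl_raw_inv)
  then obtain w where w: "cmap (glue ?S ?E) (cyl A) w" "\<forall>s\<in>carrier ?S. w (gcls ?S ?E s) = dcyl_raw i s"
    by (elim exE conjE)
  have "cmap (dcyl B A i) (cyl A) (dcyl_map i)"
  proof (rule cmap_cong)
    show "cmap (dcyl B A i) (cyl A) w" using w(1) unfolding dcyl_def .
    show "convergence_space (dcyl B A i)" by (rule pt_cs[OF ptD])
    fix x assume "x \<in> carrier (dcyl B A i)"
    then obtain s where s: "s \<in> carrier ?S" "x = gcls ?S ?E s" using glue_rep unfolding dcyl_def by blast
    have "w x = dcyl_raw i s" using w(2) s by simp
    also have "\<dots> = dcyl_map i x" using dcyl_map_cls[of i A B s] s(2) by simp
    finally show "w x = dcyl_map i x" .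
  qed
  then show ?thesis using ptD by simp
qed

lemma cont_comp_UNIV:
  assumes "continuous_on UNIV f" "continuous_on UNIV g"
  shows "continuous_on UNIV (\<lambda>x. g (f x))"
  using continuous_on_compose[OF assms(1) continuous_on_subset[OF assms(2)]] by (simp add: o_def)

lemma s3_rep:
  assumes "s \<in> carrier (sum_space A (sum_space (cyl B) A))"
  shows "(\<exists>a\<in>carrier A. s = Inl a) \<or> (\<exists>a\<in>carrier A. s = Inr (Inr a)) \<or>
         (\<exists>b\<in>carrier B. \<exists>t\<in>{0..1}. s = Inr (Inl (b, t)))"
  using assms unfolding carrier_sum carrier_cyl by blast

lemma rel_hep:
  assumes c: "cof B A (i :: 'b \<Rightarrow> 'a)"
  shows "hep TYPE('y) (dcyl B A i) (cyl A) (dcyl_map i)"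
  unfolding hep_def
proof (intro ballI allI impI)
  fix k :: real and Y :: "'y cspace" and f G
  assume k: "k \<in> {0, 1}" and a: "pseudotop Y \<and> cmap (cyl A) Y f \<and> cmap (cyl (dcyl B A i)) Y G \<and>
    (\<forall>b\<in>carrier (dcyl B A i). f (dcyl_map i b) = G (incl k b))"
  have Y: "pseudotop Y" and f: "cmap (cyl A) Y f" and G: "cmap (cyl (dcyl B A i)) Y G"
    and cpD0: "\<forall>d\<in>carrier (dcyl B A i). f (dcyl_map i d) = G (d, k)" using a by (auto simp: incl_def)
  have B: "pseudotop B" and A: "pseudotop A" and i: "cmap B A i" using cof_D[OF c] by auto
  let ?S = "sum_space A (sum_space (cyl B) A)" and ?E = "dcyl_rel B i"
  let ?D = "dcyl B A i"
  let ?cl = "gcls ?S ?E"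
  have csA: "convergence_space A" by (rule pt_cs[OF A])
  have csB: "convergence_space B" by (rule pt_cs[OF B])
  have csCB: "convergence_space (cyl B)" by (rule cs_cyl[OF csB])
  have csI: "convergence_space (sum_space (cyl B) A)" by (rule cs_sum[OF csCB csA])
  have csS: "convergence_space ?S" by (rule cs_sum[OF csA csI])
  have k01: "0 \<le> k" "k \<le> 1" using k by auto
  have clD: "?cl s \<in> carrier ?D" if "s \<in> carrier ?S" for s
    using that unfolding dcyl_def carrier_glue by blast
  have cp: "f (dcyl_raw i s) = G (?cl s, k)" if "s \<in> carrier ?S" for s
  proof -
    have "f (dcyl_map i (?cl s)) = G (?cl s, k)" by (rule cpD0[rule_format, OF clD[OF that]])
    then show ?thesis unfolding dcyl_map_cls .
  qed
  have cpA0: "f (a, 0) = G (?cl (Inl a), k)" if "a \<in> carrier A" for a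
    using cp[of "Inl a"] that by (simp add: dcyl_raw_def incl_def)
  have cpA1: "f (a, 1) = G (?cl (Inr (Inr a)), k)" if "a \<in> carrier A" for a
    using cp[of "Inr (Inr a)"] that by (simp add: dcyl_raw_def incl_def)
  have cpB: "f (i b, s) = G (?cl (Inr (Inl (b, s))), k)" if "b \<in> carrier B" "s \<in> {0..1}" for b s
    using cp[of "Inr (Inl (b, s))"] that by (simp add: dcyl_raw_def Imap_def)
  have eq0: "?cl (Inl (i b)) = ?cl (Inr (Inl (b, 0)))" if "b \<in> carrier B" for b
    by (rule gcls_eq) (use that in \<open>auto simp: dcyl_rel_def\<close>)
  have eq1: "?cl (Inr (Inr (i b))) = ?cl (Inr (Inl (b, 1)))" if "b \<in> carrier B" for b
    by (rule gcls_eq) (use that in \<open>auto simp: dcyl_rel_def\<close>)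
  have qc: "cmap ?S ?D ?cl" unfolding dcyl_def by (rule cmap_gcls[OF csS])
  have mL: "cmap A ?D (\<lambda>a. ?cl (Inl a))" by (rule cmap_comp'[OF cmap_Inl[OF csA] qc])
  have mR: "cmap A ?D (\<lambda>a. ?cl (Inr (Inr a)))"
    by (rule cmap_comp'[OF cmap_comp'[OF cmap_Inr[OF csA] cmap_Inr[OF csI]] qc])
  have mM: "cmap (cyl B) ?D (\<lambda>y. ?cl (Inr (Inl y)))"
    by (rule cmap_comp'[OF cmap_comp'[OF cmap_Inl[OF csCB] cmap_Inr[OF csI]] qc])
  have ctau: "continuous_on UNIV (tau k)" by (rule cont_tau)
  define h1 where "h1 z = G (?cl (Inl (fst z)), tau k (clamp (1 - 3 * snd z)))" for z
  define h2 where "h2 z = f (fst z, clamp (3 * snd z - 1))" for z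
  define h3 where "h3 z = G (?cl (Inr (Inr (fst z))), tau k (clamp (3 * snd z - 2)))" for z
  have l1: "cmap (cyl A) (cyl A) (\<lambda>z. (fst z, tau k (clamp (1 - 3 * snd z))))"
  proof (rule cmap_reparam1[OF csA])
    show "continuous_on UNIV (\<lambda>u. tau k (clamp (1 - 3 * u)))"
      by (rule cont_comp_UNIV[OF cont_comp_UNIV[OF _ cont_clamp] cont_tau]) (intro continuous_intros)
    show "\<And>u. u \<in> {0..1} \<Longrightarrow> tau k (clamp (1 - 3 * u)) \<in> {0..1}" using T4[OF k] C2 by simp
  qed
  have h1c: "cmap (cyl A) Y h1"
  proof -
    have "cmap (cyl A) Y (\<lambda>z. G (Imap (\<lambda>a. ?cl (Inl a)) (fst z, tau k (clamp (1 - 3 * snd z)))))"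
      by (rule cmap_comp'[OF l1 cmap_comp'[OF cmap_Imap[OF mL] G]])
    then show ?thesis unfolding h1_def Imap_def by simp
  qed
  have l2: "cmap (cyl A) (cyl A) (\<lambda>z. (fst z, clamp (3 * snd z - 1)))"
  proof (rule cmap_reparam1[OF csA])
    show "continuous_on UNIV (\<lambda>u. clamp (3 * u - 1))"
      by (rule cont_comp_UNIV[OF _ cont_clamp]) (intro continuous_intros)
    show "\<And>u. u \<in> {0..1} \<Longrightarrow> clamp (3 * u - 1) \<in> {0..1}" using C2 by simp
  qed
  have h2c: "cmap (cyl A) Y h2" unfolding h2_def by (rule cmap_comp'[OF l2 f])
  have l3: "cmap (cyl A) (cyl A) (\<lambda>z. (fst z, tau k (clamp (3 * snd z - 2))))"
  proof (rule cmap_reparam1[OF csA])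
    show "continuous_on UNIV (\<lambda>u. tau k (clamp (3 * u - 2)))"
      by (rule cont_comp_UNIV[OF cont_comp_UNIV[OF _ cont_clamp] cont_tau]) (intro continuous_intros)
    show "\<And>u. u \<in> {0..1} \<Longrightarrow> tau k (clamp (3 * u - 2)) \<in> {0..1}" using T4[OF k] C2 by simp
  qed
  have h3c: "cmap (cyl A) Y h3"
  proof -
    have "cmap (cyl A) Y (\<lambda>z. G (Imap (\<lambda>a. ?cl (Inr (Inr a))) (fst z, tau k (clamp (3 * snd z - 2)))))"
      by (rule cmap_comp'[OF l3 cmap_comp'[OF cmap_Imap[OF mR] G]])
    then show ?thesis unfolding h3_def Imap_def by simp
  qed
  define h23 where "h23 z = (if snd z \<le> 2/3 then h2 z else h3 z)" for z :: "'a \<times> real"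
  have h23c: "cmap (cyl A) Y h23"
  proof (rule pasting[OF csA Y h2c h3c, where c = "2/3"])
    show "\<And>x u. x \<in> carrier A \<Longrightarrow> u \<in> {0..2/3} \<Longrightarrow> h23 (x, u) = h2 (x, u)" unfolding h23_def by simp
    fix x u assume x: "x \<in> carrier A" and u: "u \<in> {2/3..1::real}"
    show "h23 (x, u) = h3 (x, u)"
    proof (cases "u \<le> 2/3")
      case True
      then have "u = 2/3" using u by simp
      then show ?thesis unfolding h23_def h2_def h3_def using cpA1[OF x] T2[OF k] by (simp add: clamp_def)
    next
      case False
      then show ?thesis unfolding h23_def by simp
    qed
  qed
  define F0 where "F0 z = (if snd z \<le> 1/3 then h1 z else h23 z)" for z :: "'a \<times> real"
  have F0c: "cmap (cyl A) Y F0"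
  proof (rule pasting[OF csA Y h1c h23c, where c = "1/3"])
    show "\<And>x u. x \<in> carrier A \<Longrightarrow> u \<in> {0..1/3} \<Longrightarrow> F0 (x, u) = h1 (x, u)" unfolding F0_def by simp
    fix x u assume x: "x \<in> carrier A" and u: "u \<in> {1/3..1::real}"
    show "F0 (x, u) = h23 (x, u)"
    proof (cases "u \<le> 1/3")
      case True
      then have "u = 1/3" using u by simp
      then show ?thesis unfolding F0_def h1_def h23_def h2_def using cpA0[OF x] T2[OF k] by (simp add: clamp_def)
    next
      case False
      then show ?thesis unfolding F0_def by simp
    qed
  qed
  have Fv1: "F0 (a, u) = G (?cl (Inl a), tau k (1 - 3 * u))" if "a \<in> carrier A" "0 \<le> u" "u \<le> 1/3" for a u
    using that unfolding F0_def h1_def by (simp add: C1)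
  have Fv2: "F0 (a, u) = f (a, 3 * u - 1)" if "a \<in> carrier A" "1/3 \<le> u" "u \<le> 2/3" for a u
  proof (cases "u \<le> 1/3")
    case True
    then have "u = 1/3" using that by simp
    then have e: "3 * u - 1 = 0" "1 - 3 * u = 0" "snd (a, u) \<le> 1/3" by simp_all
    have "F0 (a, u) = G (?cl (Inl a), tau k (clamp (1 - 3 * u)))" unfolding F0_def h1_def using e by simp
    also have "\<dots> = f (a, 0)" using cpA0[OF that(1)] T2[OF k] e by (simp add: clamp_def)
    finally show ?thesis using e by simp
  next
    case False
    then show ?thesis using that unfolding F0_def h23_def h2_def by (simp add: C1)
  qed
  have Fv3: "F0 (a, u) = G (?cl (Inr (Inr a)), tau k (3 * u - 2))" if "a \<in> carrier A" "2/3 \<le> u" "u \<le> 1" for a u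
  proof (cases "u \<le> 2/3")
    case True
    then have "u = 2/3" using that by simp
    then have e: "3 * u - 1 = 1" "3 * u - 2 = 0" "\<not> snd (a, u) \<le> 1/3" "snd (a, u) \<le> 2/3" by simp_all
    have "F0 (a, u) = f (a, clamp (3 * u - 1))" unfolding F0_def h23_def h2_def using e by simp
    also have "\<dots> = f (a, 1)" using e by (simp add: clamp_def)
    also have "\<dots> = G (?cl (Inr (Inr a)), tau k (3 * u - 2))" using cpA1[OF that(1)] T2[OF k] e by simp
    finally show ?thesis .
  next
    case False
    then show ?thesis using that unfolding F0_def h23_def h3_def by (simp add: C1)
  qed
  define G0 where "G0 z = G (?cl (Inr (Inl (fst (fst z), psi1 (snd (fst z), snd z)))), tau k (psi2 (snd (fst z), snd z)))" for z
  have r2: "cmap (cyl (cyl B)) (cyl (cyl B)) (\<lambda>z. ((fst (fst z), psi1 (snd (fst z), snd z)), tau k (psi2 (snd (fst z), snd z))))"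
  proof (rule cmap_reparam2[OF csB cont_psi1 cont_comp_UNIV[OF cont_psi2 cont_tau]])
    show "\<And>u v. u \<in> {0..1} \<Longrightarrow> v \<in> {0..1} \<Longrightarrow> psi1 (u, v) \<in> {0..1}" using R3 by simp
    show "\<And>u v. u \<in> {0..1} \<Longrightarrow> v \<in> {0..1} \<Longrightarrow> tau k (psi2 (u, v)) \<in> {0..1}" using R3 T4[OF k] by simp
  qed
  have G0c: "cmap (cyl (cyl B)) Y G0"
  proof -
    have "cmap (cyl (cyl B)) Y (\<lambda>z. G (Imap (\<lambda>y. ?cl (Inr (Inl y))) ((fst (fst z), psi1 (snd (fst z), snd z)), tau k (psi2 (snd (fst z), snd z)))))"
      by (rule cmap_comp'[OF r2 cmap_comp'[OF cmap_Imap[OF mM] G]])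
    then show ?thesis unfolding G0_def Imap_def by simp
  qed
  have compat: "F0 (i b, u) = G0 ((b, u), 0)" if b: "b \<in> carrier B" and u: "u \<in> {0..1}" for b u
  proof -
    have ib: "i b \<in> carrier A" using cmapD1[OF i b] .
    consider "u \<le> 1/3" | "1/3 \<le> u \<and> u \<le> 2/3" | "2/3 \<le> u" by linarith
    then show ?thesis
    proof cases
      case 1
      then have "psi1 (u, 0) = 0 \<and> psi2 (u, 0) = 1 - 3 * u" using R4a u by simp
      then show ?thesis using Fv1[OF ib] 1 u eq0[OF b] unfolding G0_def by simp
    next
      case 2
      then have ps: "psi1 (u, 0) = 3 * u - 1 \<and> psi2 (u, 0) = 0" using R4b by simp
      have "3 * u - 1 \<in> {0..1}" using 2 by simp
      then show ?thesis using Fv2[OF ib] 2 ps cpB[OF b] T2[OF k] unfolding G0_def by simp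
    next
      case 3
      then have "psi1 (u, 0) = 1 \<and> psi2 (u, 0) = 3 * u - 2" using R4c u by simp
      then show ?thesis using Fv3[OF ib] 3 u eq1[OF b] unfolding G0_def by simp
    qed
  qed
  obtain K where K: "cmap (cyl (cyl A)) Y K" "\<forall>a\<in>carrier A. \<forall>u\<in>{0..1}. K ((a, u), 0) = F0 (a, u)"
    "\<forall>b\<in>carrier B. \<forall>u\<in>{0..1}. \<forall>v\<in>{0..1}. K ((i b, u), v) = G0 ((b, u), v)"
    using hep_cyl0[OF c Y F0c G0c compat] by blast
  define H where "H z = K ((fst (fst z), phi1 (snd (fst z), tau k (snd z))), phi2 (snd (fst z), tau k (snd z)))" for z
  have ctp: "continuous_on UNIV (\<lambda>p :: real \<times> real. (fst p, tau k (snd p)))"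
    unfolding tau_def by (intro continuous_intros)
  have r3: "cmap (cyl (cyl A)) (cyl (cyl A)) (\<lambda>z. ((fst (fst z), (\<lambda>p. phi1 (fst p, tau k (snd p))) (snd (fst z), snd z)),
      (\<lambda>p. phi2 (fst p, tau k (snd p))) (snd (fst z), snd z)))"
  proof (rule cmap_reparam2[OF csA cont_comp_UNIV[OF ctp cont_phi1] cont_comp_UNIV[OF ctp cont_phi2]])
    show "\<And>u v. u \<in> {0..1} \<Longrightarrow> v \<in> {0..1} \<Longrightarrow> (\<lambda>p. phi1 (fst p, tau k (snd p))) (u, v) \<in> {0..1}"
      using R1 T4[OF k] by simp
    show "\<And>u v. u \<in> {0..1} \<Longrightarrow> v \<in> {0..1} \<Longrightarrow> (\<lambda>p. phi2 (fst p, tau k (snd p))) (u, v) \<in> {0..1}"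
      using R1 T4[OF k] by simp
  qed
  have Hc: "cmap (cyl (cyl A)) Y H"
    using cmap_comp'[OF r3 K(1)] unfolding H_def by simp
  show "\<exists>H. cmap (cyl (cyl A)) Y H \<and> (\<forall>a\<in>carrier (cyl A). H (incl k a) = f a) \<and>
     (\<forall>z\<in>carrier (cyl ?D). H (Imap (dcyl_map i) z) = G z)"
  proof (intro exI[of _ H] conjI ballI)
    show "cmap (cyl (cyl A)) Y H" by (rule Hc)
  next
    fix z assume "z \<in> carrier (cyl A)"
    then obtain a s where z: "z = (a, s)" "a \<in> carrier A" "0 \<le> s" "s \<le> 1" by auto
    have ph: "phi1 (s, 0) = (1 + s) / 3 \<and> phi2 (s, 0) = 0" using R5a z by simp
    have "H (incl k z) = K ((a, phi1 (s, 0)), phi2 (s, 0))" unfolding H_def incl_def using z T3[OF k] by simp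
    also have "\<dots> = K ((a, (1 + s) / 3), 0)" by (simp only: ph)
    also have "\<dots> = F0 (a, (1 + s) / 3)" using K(2) z by simp
    also have "\<dots> = f (a, 3 * ((1 + s) / 3) - 1)" using Fv2[OF z(2)] z by simp
    also have "3 * ((1 + s) / 3) - 1 = s" by (simp add: field_simps)
    finally show "H (incl k z) = f z" using z by simp
  next
    fix z assume "z \<in> carrier (cyl ?D)"
    then obtain d t where z: "z = (d, t)" "d \<in> carrier ?D" "0 \<le> t" "t \<le> 1" by auto
    obtain s0 where s0: "s0 \<in> carrier ?S" "d = ?cl s0" using glue_rep z(2) unfolding dcyl_def by blast
    have jd: "dcyl_map i d = dcyl_raw i s0" using dcyl_map_cls[of i A B s0] s0(2) by simp
    define t' where "t' = tau k t"
    have t': "0 \<le> t'" "t' \<le> 1" "tau k t' = t" using T4[OF k z(3,4)] T1[OF k] unfolding t'_def by auto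
    from s3_rep[OF s0(1)] show "H (Imap (dcyl_map i) z) = G z"
    proof (elim disjE bexE)
      fix a assume a: "a \<in> carrier A" and e: "s0 = Inl a"
      have ph: "phi1 (0, t') = (1 - t') / 3 \<and> phi2 (0, t') = 0" using R5b t' by simp
      have "H (Imap (dcyl_map i) z) = K ((a, phi1 (0, t')), phi2 (0, t'))"
        unfolding H_def Imap_def using z jd e by (simp add: dcyl_raw_def incl_def t'_def)
      also have "\<dots> = K ((a, (1 - t') / 3), 0)" by (simp only: ph)
      also have "\<dots> = F0 (a, (1 - t') / 3)" using K(2) a t' by simp
      also have "\<dots> = G (?cl (Inl a), tau k (1 - 3 * ((1 - t') / 3)))" using Fv1[OF a] t' by simp
      also have "1 - 3 * ((1 - t') / 3) = t'" by (simp add: field_simps)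
      also have "G (?cl (Inl a), tau k t') = G z" using z s0 e t' by simp
      finally show ?thesis .
    next
      fix a assume a: "a \<in> carrier A" and e: "s0 = Inr (Inr a)"
      have ph: "phi1 (1, t') = (2 + t') / 3 \<and> phi2 (1, t') = 0" using R5c t' by simp
      have "H (Imap (dcyl_map i) z) = K ((a, phi1 (1, t')), phi2 (1, t'))"
        unfolding H_def Imap_def using z jd e by (simp add: dcyl_raw_def incl_def t'_def)
      also have "\<dots> = K ((a, (2 + t') / 3), 0)" by (simp only: ph)
      also have "\<dots> = F0 (a, (2 + t') / 3)" using K(2) a t' by simp
      also have "\<dots> = G (?cl (Inr (Inr a)), tau k (3 * ((2 + t') / 3) - 2))" using Fv3[OF a] t' by simp
      also have "3 * ((2 + t') / 3) - 2 = t'" by (simp add: field_simps)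
      also have "G (?cl (Inr (Inr a)), tau k t') = G z" using z s0 e t' by simp
      finally show ?thesis .
    next
      fix b s assume b: "b \<in> carrier B" and s: "s \<in> {0..1}" and e: "s0 = Inr (Inl (b, s))"
      have ph: "0 \<le> phi1 (s, t') \<and> phi1 (s, t') \<le> 1 \<and> 0 \<le> phi2 (s, t') \<and> phi2 (s, t') \<le> 1" using R1 s t' by simp
      have ps: "psi1 (phi1 (s, t'), phi2 (s, t')) = s \<and> psi2 (phi1 (s, t'), phi2 (s, t')) = t'" using R2 s t' by simp
      have "H (Imap (dcyl_map i) z) = K ((i b, phi1 (s, t')), phi2 (s, t'))"
        unfolding H_def Imap_def using z jd e by (simp add: dcyl_raw_def Imap_def t'_def)
      also have "\<dots> = G0 ((b, phi1 (s, t')), phi2 (s, t'))" using K(3) b ph by simp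
      also have "\<dots> = G (?cl (Inr (Inl (b, s))), tau k t')" unfolding G0_def using ps by simp
      also have "\<dots> = G z" using z s0 e t' by simp
      finally show ?thesis .
    qed
  qed
qed

theorem mainTheorem2:
  shows
  \<comment> \<open>the empty space is an initial object of PsTop\<close>
  "(pseudotop (empty_space :: 'b cspace) \<and>
    (\<forall>X :: 'a cspace. pseudotop X \<longrightarrow>
       (\<exists>f. cmap (empty_space :: 'b cspace) X f) \<and>
       (\<forall>f g. cmap (empty_space :: 'b cspace) X f \<and> cmap (empty_space :: 'b cspace) X g \<longrightarrow>
          (\<forall>z\<in>carrier (empty_space :: 'b cspace). f z = g z)))) \<and>
   \<comment> \<open>(I, i_0, i_1, p) is a cylinder on PsTop\<close>
   (\<forall>X :: 'a cspace. pseudotop X \<longrightarrow>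
      pseudotop (cyl X) \<and> (\<forall>k\<in>{0, 1::real}. cmap X (cyl X) (incl k)) \<and>
      cmap (cyl X) X proj \<and> (\<forall>k\<in>{0, 1::real}. \<forall>x\<in>carrier X. proj (incl k x) = x)) \<and>
   (\<forall>(X :: 'a cspace) (Y :: 'b cspace) f. pseudotop X \<and> pseudotop Y \<and> cmap X Y f \<longrightarrow>
      cmap (cyl X) (cyl Y) (Imap f) \<and>
      (\<forall>k\<in>{0, 1::real}. \<forall>x\<in>carrier X. Imap f (incl k x) = incl k (f x)) \<and>
      (\<forall>z\<in>carrier (cyl X). proj (Imap f z) = f (proj z))) \<and>
   \<comment> \<open>(1) cylinder axiom\<close>
   cyl (empty_space :: 'a cspace) = empty_space \<and>
   \<comment> \<open>(2) pushout axiom\<close>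
   (\<forall>(B :: 'b cspace) (A :: 'a cspace) (X :: 'x cspace) i f.
      cof B A i \<and> pseudotop X \<and> cmap B X f \<longrightarrow>
      is_pushout TYPE('z) B A X (pushout_space B A X i f) i f
        (po_inl B A X i f) (po_inr B A X i f) \<and>
      cof X (pushout_space B A X i f) (po_inr B A X i f) \<and>
      is_pushout TYPE('z) (cyl B) (cyl A) (cyl X) (cyl (pushout_space B A X i f))
        (Imap i) (Imap f) (Imap (po_inl B A X i f)) (Imap (po_inr B A X i f))) \<and>
   \<comment> \<open>(3) cofibration axiom\<close>
   (\<forall>(B :: 'b cspace) (A :: 'a cspace) i.
      pseudotop B \<and> pseudotop A \<and> ps_iso B A i \<longrightarrow> cof B A i) \<and>
   (\<forall>(X :: 'a cspace) f. pseudotop X \<longrightarrow> cof (empty_space :: 'b cspace) X f) \<and>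
   (\<forall>(C :: 'c cspace) (B :: 'b cspace) (A :: 'a cspace) i i'.
      cof C B i \<and> cof B A i' \<longrightarrow> cof C A (i' \<circ> i)) \<and>
   (\<forall>(B :: 'b cspace) (A :: 'a cspace) i. cof B A i \<longrightarrow> hep TYPE('y) B A i) \<and>
   \<comment> \<open>(4) interchange axiom\<close>
   (\<forall>X :: 'a cspace. pseudotop X \<longrightarrow>
      (\<exists>T. cmap (cyl (cyl X)) (cyl (cyl X)) T \<and>
         (\<forall>k\<in>{0, 1::real}. \<forall>z\<in>carrier (cyl X).
            T (incl k z) = Imap (incl k) z \<and> T (Imap (incl k) z) = incl k z))) \<and>
   \<comment> \<open>(5) relative cylinder axiom\<close>
   (\<forall>(B :: 'b cspace) (A :: 'a cspace) i.
      cof B A i \<longrightarrow> cof (dcyl B A i) (cyl A) (dcyl_map i))"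
proof -
  have c1: "pseudotop (empty_space :: 'b cspace) \<and>
    (\<forall>X :: 'a cspace. pseudotop X \<longrightarrow>
       (\<exists>f. cmap (empty_space :: 'b cspace) X f) \<and>
       (\<forall>f g. cmap (empty_space :: 'b cspace) X f \<and> cmap (empty_space :: 'b cspace) X g \<longrightarrow>
          (\<forall>z\<in>carrier (empty_space :: 'b cspace). f z = g z)))"
    using pt_empty cmap_empty by auto
  have c2: "\<forall>X :: 'a cspace. pseudotop X \<longrightarrow>
      pseudotop (cyl X) \<and> (\<forall>k\<in>{0, 1::real}. cmap X (cyl X) (incl k)) \<and>
      cmap (cyl X) X proj \<and> (\<forall>k\<in>{0, 1::real}. \<forall>x\<in>carrier X. proj (incl k x) = x)"
  proof (intro allI impI conjI ballI)
    fix X :: "'a cspace" and k :: real assume X: "pseudotop X" and k: "k \<in> {0, 1}"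
    show "cmap X (cyl X) (incl k)" by (rule cmap_incl[OF pt_cs[OF X]]) (use k in auto)
  qed (auto simp: pt_cyl cmap_proj proj_def incl_def)
  have c3: "\<forall>(X :: 'a cspace) (Y :: 'b cspace) f. pseudotop X \<and> pseudotop Y \<and> cmap X Y f \<longrightarrow>
      cmap (cyl X) (cyl Y) (Imap f) \<and>
      (\<forall>k\<in>{0, 1::real}. \<forall>x\<in>carrier X. Imap f (incl k x) = incl k (f x)) \<and>
      (\<forall>z\<in>carrier (cyl X). proj (Imap f z) = f (proj z))"
    by (auto simp: cmap_Imap Imap_def incl_def proj_def)
  have c4: "cyl (empty_space :: 'a cspace) = empty_space" by (rule cyl_empty)
  have c5: "\<forall>(B :: 'b cspace) (A :: 'a cspace) (X :: 'x cspace) i f.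
      cof B A i \<and> pseudotop X \<and> cmap B X f \<longrightarrow>
      is_pushout TYPE('z) B A X (pushout_space B A X i f) i f
        (po_inl B A X i f) (po_inr B A X i f) \<and>
      cof X (pushout_space B A X i f) (po_inr B A X i f) \<and>
      is_pushout TYPE('z) (cyl B) (cyl A) (cyl X) (cyl (pushout_space B A X i f))
        (Imap i) (Imap f) (Imap (po_inl B A X i f)) (Imap (po_inr B A X i f))"
  proof (intro allI impI)
    fix B :: "'b cspace" and A :: "'a cspace" and X :: "'x cspace" and i f
    assume a: "cof B A i \<and> pseudotop X \<and> cmap B X f"
    then have c: "cof B A i" and X: "pseudotop X" and f: "cmap B X f" by auto
    show "is_pushout TYPE('z) B A X (pushout_space B A X i f) i f
        (po_inl B A X i f) (po_inr B A X i f) \<and>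
      cof X (pushout_space B A X i f) (po_inr B A X i f) \<and>
      is_pushout TYPE('z) (cyl B) (cyl A) (cyl X) (cyl (pushout_space B A X i f))
        (Imap i) (Imap f) (Imap (po_inl B A X i f)) (Imap (po_inr B A X i f))"
      by (rule conjI[OF pushout_part1[OF c X f] conjI[OF pushout_part2[OF c X f] pushout_part3[OF c X f]]])
  qed
  have c6: "\<forall>(B :: 'b cspace) (A :: 'a cspace) i.
      pseudotop B \<and> pseudotop A \<and> ps_iso B A i \<longrightarrow> cof B A i"
  proof (intro allI impI)
    fix B :: "'b cspace" and A :: "'a cspace" and i
    assume a: "pseudotop B \<and> pseudotop A \<and> ps_iso B A i"
    then have "hep TYPE('a + 'b \<times> real) B A i" using iso_cof by blast
    then show "cof B A i" unfolding cof_def using a unfolding ps_iso_def by blast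
  qed
  have c7: "\<forall>(X :: 'a cspace) f. pseudotop X \<longrightarrow> cof (empty_space :: 'b cspace) X f"
    unfolding cof_def using pt_empty cmap_empty empty_hep by blast
  have c8: "\<forall>(C :: 'c cspace) (B :: 'b cspace) (A :: 'a cspace) i i'.
      cof C B i \<and> cof B A i' \<longrightarrow> cof C A (i' \<circ> i)"
  proof (intro allI impI)
    fix C :: "'c cspace" and B :: "'b cspace" and A :: "'a cspace" and i i'
    assume a: "cof C B i \<and> cof B A i'"
    then have h: "hep TYPE('a + 'c \<times> real) C A (i' \<circ> i)" using comp_hep by blast
    have "pseudotop C" "cmap C B i" using a cof_D by blast+
    moreover have "pseudotop A" "cmap B A i'" using a cof_D by blast+
    ultimately show "cof C A (i' \<circ> i)" unfolding cof_def using h cmap_comp by blast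
  qed
  have c9: "\<forall>(B :: 'b cspace) (A :: 'a cspace) i. cof B A i \<longrightarrow> hep TYPE('y) B A i"
    using hep_general by blast
  have c10: "\<forall>X :: 'a cspace. pseudotop X \<longrightarrow>
      (\<exists>T. cmap (cyl (cyl X)) (cyl (cyl X)) T \<and>
         (\<forall>k\<in>{0, 1::real}. \<forall>z\<in>carrier (cyl X).
            T (incl k z) = Imap (incl k) z \<and> T (Imap (incl k) z) = incl k z))"
  proof (intro allI impI)
    fix X :: "'a cspace" assume X: "pseudotop X"
    show "\<exists>T. cmap (cyl (cyl X)) (cyl (cyl X)) T \<and>
         (\<forall>k\<in>{0, 1::real}. \<forall>z\<in>carrier (cyl X).
            T (incl k z) = Imap (incl k) z \<and> T (Imap (incl k) z) = incl k z)"
      by (intro exI[of _ "\<lambda>z. ((fst (fst z), snd z), snd (fst z))"] conjI swap_cmap[OF pt_cs[OF X]])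
         (auto simp: incl_def Imap_def)
  qed
  have c11: "\<forall>(B :: 'b cspace) (A :: 'a cspace) i.
      cof B A i \<longrightarrow> cof (dcyl B A i) (cyl A) (dcyl_map i)"
  proof (intro allI impI)
    fix B :: "'b cspace" and A :: "'a cspace" and i
    assume c: "cof B A i"
    have "pseudotop (cyl A)" using pt_cyl cof_D[OF c] by blast
    then show "cof (dcyl B A i) (cyl A) (dcyl_map i)"
      unfolding cof_def using dcyl_basic[OF c] rel_hep[OF c] by blast
  qed
  show ?thesis
    by (rule conjI[OF c1 conjI[OF c2 conjI[OF c3 conjI[OF c4 conjI[OF c5 conjI[OF c6
         conjI[OF c7 conjI[OF c8 conjI[OF c9 conjI[OF c10 c11]]]]]]]]]])
qed

end
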